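(* Consider the curve time series model described in the context, in which $X_t(\cdot)$ is $d$-dimensional with dynamic space $\mathcal{M}=\operatorname{span}\{\varphi_1,\ldots,\varphi_d\}$. Suppose the $d\times d$ matrix $\Sigma_{k_0}=E(\xi_t\xi_{t+k_0}')$ has full rank $d$ for some integer $k_0\ge 1$. Then: (i) the operator $N_{k_0}$ on $L_2(\mathcal{I})$ has exactly $d$ nonzero eigenvalues, and $\mathcal{M}$ is the linear space spanned by the corresponding $d$ eigenfunctions; (ii) for every integer $p\ge k_0$, the statement in (i) also holds for the operator $K=\sum_{k=1}^p N_k$.
   Context: Let $\mathcal{I}$ be a compact interval and $L_2(\mathcal{I})$ the Hilbert space of square-integrable functions on $\mathcal{I}$ with inner product $\langle f,g\rangle=\int_{\mathcal{I}} f(u)g(u)\,du$. A function $L(u,v)$ on $\mathcal{I}\times\mathcal{I}$ is identified with the integral operator $g\mapsto \int_{\mathcal{I}}L(\cdot,v)g(v)\,dv$. Curves satisfy $Y_t(u)=X_t(u)+\varepsilon_t(u)$, $u\in\mathcal{I}$, $t\in\mathbb{Z}$, where: $E\varepsilon_t(u)=0$ and $\operatorname{cov}(\varepsilon_t(u),\varepsilon_s(v))=0$ for all $u,v$ whenever $t\ne s$; $\int_{\mathcal{I}}E\{X_t(u)^2+\varepsilon_t(u)^2\}\,du<\infty$; $\mu(u)=E X_t(u)$ and $M_k(u,v)=\operatorname{cov}(X_t(u),X_{t+k}(v))$ do not depend on $t$; and $X_t(\cdot)$ and $\varepsilon_{t+k}(\cdot)$ are uncorrelated for all integers $k$. Write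 the spectral decomposition $M_0(u,v)=\sum_{j\ge1}\lambda_j\varphi_j(u)\varphi_j(v)$ with $\lambda_1\ge\lambda_2\ge\cdots\ge0$ and orthonormal $\varphi_j$, so that $X_t(u)-\mu(u)=\sum_j\xi_{tj}\varphi_j(u)$ with $\xi_{tj}=\langle X_t-\mu,\varphi_j\rangle$ (Karhunen–Loève expansion; $E\xi_{tj}=0$, $\operatorname{var}(\xi_{tj})=\lambda_j$, $\operatorname{cov}(\xi_{ti},\xi_{tj})=0$ for $i\neq j$). $X_t$ is called $d$-dimensional ($d\ge1$ finite) if $\lambda_d\ne0$ and $\lambda_{d+1}=0$; then $\mathcal{M}=\operatorname{span}\{\varphi_1,\ldots,\varphi_d\}$ and $\xi_t=(\xi_{t1},\ldots,\xi_{td})'$. Define $N_k(u,v)=\int_{\mathcal{I}}M_k(u,z)M_k(v,z)\,dz$ and, for an integer $p\ge1$, $K(u,v)=\sum_{k=1}^p N_k(u,v)$. *)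

theory Defs
  imports "HOL-Analysis.Analysis" "HOL-Probability.Probability"
begin

text \<open>Elements of L2(I), I a compact interval, are represented by real functions;
  equality in L2(I) is equality almost everywhere on I.\<close>

definition L2 :: "real set \<Rightarrow> (real \<Rightarrow> real) \<Rightarrow> bool" where
  "L2 I f \<longleftrightarrow> f \<in> borel_measurable lborel \<and> set_integrable lborel I (\<lambda>u. (f u)\<^sup>2)"

definition l2_inner :: "real set \<Rightarrow> (real \<Rightarrow> real) \<Rightarrow> (real \<Rightarrow> real) \<Rightarrow> real" where
  "l2_inner I f g = (LINT u:I|lborel. f u * g u)"

definition ae_eq_on :: "real set \<Rightarrow> (real \<Rightarrow> real) \<Rightarrow> (real \<Rightarrow> real) \<Rightarrow> bool" where
  "ae_eq_on I f g \<longleftrightarrow> (AE u in lborel. u \<in> I \<longrightarrow> f u = g u)"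

definition kop :: "real set \<Rightarrow> (real \<Rightarrow> real \<Rightarrow> real) \<Rightarrow> (real \<Rightarrow> real) \<Rightarrow> (real \<Rightarrow> real)" where
  "kop I L g = (\<lambda>u. LINT v:I|lborel. L u v * g v)"

definition eigenpair :: "real set \<Rightarrow> (real \<Rightarrow> real \<Rightarrow> real) \<Rightarrow> real \<Rightarrow> (real \<Rightarrow> real) \<Rightarrow> bool" where
  "eigenpair I L \<theta> g \<longleftrightarrow> L2 I g \<and> \<not> ae_eq_on I g (\<lambda>_. 0) \<and> ae_eq_on I (kop I L g) (\<lambda>u. \<theta> * g u)"

definition in_span_L2 :: "real set \<Rightarrow> ('d::finite \<Rightarrow> real \<Rightarrow> real) \<Rightarrow> (real \<Rightarrow> real) \<Rightarrow> bool" where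
  "in_span_L2 I B g \<longleftrightarrow> (\<exists>c. ae_eq_on I g (\<lambda>u. \<Sum>j\<in>UNIV. c j * B j u))"

definition Nk :: "real set \<Rightarrow> (nat \<Rightarrow> real \<Rightarrow> real \<Rightarrow> real) \<Rightarrow> nat \<Rightarrow> real \<Rightarrow> real \<Rightarrow> real" where
  "Nk I M k u v = (LINT z:I|lborel. M k u z * M k v z)"

definition Kp :: "real set \<Rightarrow> (nat \<Rightarrow> real \<Rightarrow> real \<Rightarrow> real) \<Rightarrow> nat \<Rightarrow> real \<Rightarrow> real \<Rightarrow> real" where
  "Kp I M p u v = (\<Sum>k\<in>{1..p}. Nk I M k u v)"

definition kl_score :: "real set \<Rightarrow> (int \<Rightarrow> 'w \<Rightarrow> real \<Rightarrow> real) \<Rightarrow> (real \<Rightarrow> real)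
    \<Rightarrow> ('d \<Rightarrow> real \<Rightarrow> real) \<Rightarrow> int \<Rightarrow> 'd \<Rightarrow> 'w \<Rightarrow> real" where
  "kl_score I X \<mu> \<phi> t j \<omega> = (LINT u:I|lborel. (X t \<omega> u - \<mu> u) * \<phi> j u)"

text \<open>The operator with kernel L has exactly CARD('d) nonzero eigenvalues (counted with
  multiplicity), and the span of the corresponding eigenfunctions equals span{phi_j}:
  there are orthonormal eigenfunctions psi_j with nonzero eigenvalues theta_j, every
  eigenfunction for a nonzero eigenvalue lies in span{psi_j}, and span{psi_j} = span{phi_j}.\<close>
definition nonzero_eigenspace_is :: "real set \<Rightarrow> (real \<Rightarrow> real \<Rightarrow> real) \<Rightarrow> ('d::finite \<Rightarrow> real \<Rightarrow> real) \<Rightarrow> bool" where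
  "nonzero_eigenspace_is I L \<phi> \<longleftrightarrow>
     (\<exists>(\<theta>::'d \<Rightarrow> real) (\<psi>::'d \<Rightarrow> real \<Rightarrow> real).
        (\<forall>j. \<theta> j \<noteq> 0 \<and> eigenpair I L (\<theta> j) (\<psi> j)) \<and>
        (\<forall>i j. l2_inner I (\<psi> i) (\<psi> j) = (if i = j then 1 else 0)) \<and>
        (\<forall>\<theta>' g. \<theta>' \<noteq> 0 \<and> eigenpair I L \<theta>' g \<longrightarrow> in_span_L2 I \<psi> g) \<and>
        (\<forall>j. in_span_L2 I \<phi> (\<psi> j)) \<and>
        (\<forall>j. in_span_L2 I \<psi> (\<phi> j)))"

end

theory Submission
  imports Defs
begin


lemma quad_zero:
  fixes b c :: real
  assumes "\<And>t. 2*t*b + t^2*c \<le> 0"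
  shows "b = 0"
proof (rule ccontr)
  assume nb: "b \<noteq> 0"
  define s where "s = 1/(\<bar>c\<bar>+1)"
  have s: "s > 0" "s * \<bar>c\<bar> < 1" unfolding s_def by (auto simp: field_simps)
  have "2*(s*b)*b + (s*b)^2*c \<le> 0" using assms .
  hence "b^2 * (s*(2 + s*c)) \<le> 0" by (simp add: power2_eq_square algebra_simps)
  moreover have "s*(2 + s*c) > 0"
  proof -
    have "s*c \<ge> - (s*\<bar>c\<bar>)" using s by (simp add: abs_if mult_less_0_iff)
    thus ?thesis using s by (intro mult_pos_pos) auto
  qed
  moreover have "b^2 > 0" using nb by simp
  ultimately show False by (metis mult_pos_pos not_le)
qed


lemma max_eigvec:
  fixes A :: "real^'n^'n" and S :: "(real^'n) set"
  assumes sym: "transpose A = A" and sub: "subspace S" and inv: "\<And>y. y \<in> S \<Longrightarrow> A *v y \<in> S"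
    and ne: "x0 \<in> S" "x0 \<noteq> 0"
  obtains x where "x \<in> S" "norm x = 1" "A *v x = (x \<bullet> (A *v x)) *\<^sub>R x"
proof -
  let ?T = "S \<inter> sphere 0 1"
  have "compact ?T"
    using compact_Int_closed[OF compact_sphere closed_subspace[OF sub]] by (simp add: Int_commute)
  moreover have "?T \<noteq> {}"
  proof -
    have "(1/norm x0) *\<^sub>R x0 \<in> ?T" using ne sub by (auto simp: subspace_scale)
    thus ?thesis by blast
  qed
  moreover have "continuous_on ?T (\<lambda>y. y \<bullet> (A *v y))"
    by (intro continuous_intros continuous_on_id)
  ultimately obtain x where x: "x \<in> ?T" and mx: "\<And>y. y \<in> ?T \<Longrightarrow> y \<bullet> (A *v y) \<le> x \<bullet> (A *v x)"
    using continuous_attains_sup[of ?T "\<lambda>y. y \<bullet> (A *v y)"] by blast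
  have xS: "x \<in> S" and nx: "norm x = 1" using x by auto
  have symm: "u \<bullet> (A *v v) = v \<bullet> (A *v u)" for u v
    by (metis dot_lmul_matrix inner_commute sym vector_transpose_matrix)
  let ?q = "x \<bullet> (A *v x)"
  have orth: "y \<bullet> (A *v x) = 0" if yS: "y \<in> S" and yx: "y \<bullet> x = 0" for y
  proof (rule quad_zero)
    fix t :: real
    let ?z = "x + t *\<^sub>R y"
    have nz: "?z \<bullet> ?z = 1 + t^2 * (y \<bullet> y)"
    proof -
      have "x \<bullet> x = 1" using nx by (simp add: norm_eq_1)
      thus ?thesis using yx by (simp add: inner_add_left inner_add_right inner_commute power2_eq_square)
    qed
    have zS: "?z \<in> S" using xS yS sub by (simp add: subspace_add subspace_scale)
    have qz: "?z \<bullet> (A *v ?z) = ?q + 2*t*(y \<bullet> (A *v x)) + t^2 * (y \<bullet> (A *v y))"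
      using symm[of x y] by (simp add: matrix_vector_right_distrib algebra_simps power2_eq_square)
    have "?z \<bullet> (A *v ?z) \<le> ?q * (?z \<bullet> ?z)"
    proof (cases "?z = 0")
      case True thus ?thesis by simp
    next
      case False
      let ?w = "(1/norm ?z) *\<^sub>R ?z"
      have "?w \<in> ?T" using False zS sub by (auto simp: subspace_scale)
      hence "?w \<bullet> (A *v ?w) \<le> ?q" by (rule mx)
      hence "(1/norm ?z)^2 * (?z \<bullet> (A *v ?z)) \<le> ?q"
        by (simp add: power2_eq_square algebra_simps)
      hence "?z \<bullet> (A *v ?z) \<le> ?q * (norm ?z)^2"
        using False by (simp add: field_simps power2_eq_square)
      thus ?thesis by (simp add: dot_square_norm[symmetric] power2_norm_eq_inner)
    qed
    hence "?q + 2*t*(y \<bullet> (A *v x)) + t^2 * (y \<bullet> (A *v y)) \<le> ?q * (1 + t^2 * (y \<bullet> y))"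
      using qz nz by simp
    thus "2*t*(y \<bullet> (A *v x)) + t^2 * (y \<bullet> (A *v y) - ?q * (y \<bullet> y)) \<le> 0"
      by (simp add: algebra_simps)
  qed
  define v where "v = A *v x - ?q *\<^sub>R x"
  have vS: "v \<in> S" unfolding v_def using xS inv sub by (simp add: subspace_diff subspace_scale)
  have xx: "x \<bullet> x = 1" using nx by (simp add: norm_eq_1)
  have vx: "v \<bullet> x = 0" unfolding v_def using xx by (simp add: inner_diff_left inner_commute[of x "A *v x"])
  have "v \<bullet> (A *v x) = 0" by (rule orth[OF vS vx])
  hence "v \<bullet> v = 0" unfolding v_def using vx[unfolded v_def]
    by (simp add: inner_diff_right inner_diff_left)
  hence "v = 0" by simp
  thus ?thesis using that xS nx unfolding v_def by simp
qed


lemma eig_basis_subspace: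
  fixes A :: "real^'n^'n"
  assumes sym: "transpose A = A"
  shows "subspace S \<Longrightarrow> (\<forall>y\<in>S. A *v y \<in> S) \<Longrightarrow> dim S = n \<Longrightarrow>
     \<exists>B. B \<subseteq> S \<and> card B = n \<and> finite B \<and> pairwise orthogonal B \<and>
         (\<forall>x\<in>B. norm x = 1 \<and> (\<exists>c. A *v x = c *\<^sub>R x))"
proof (induction n arbitrary: S)
  case 0
  thus ?case by (intro exI[of _ "{}"]) auto
next
  case (Suc n)
  have symm: "u \<bullet> (A *v v) = v \<bullet> (A *v u)" for u v
    by (metis dot_lmul_matrix inner_commute sym vector_transpose_matrix)
  have "S \<noteq> {0}" proof assume "S = {0}" hence "dim S = 0" by simp thus False using Suc.prems(3) by simp qed
  moreover have "0 \<in> S" using Suc.prems(1) by (simp add: subspace_0)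
  ultimately obtain x0 where x0: "x0 \<in> S" "x0 \<noteq> 0" by blast
  obtain x where xS: "x \<in> S" and nx: "norm x = 1" and ev: "A *v x = (x \<bullet> (A *v x)) *\<^sub>R x"
    using max_eigvec[OF sym Suc.prems(1) _ x0] Suc.prems(2) by blast
  define S' where "S' = {y \<in> S. \<forall>z \<in> span {x}. orthogonal z y}"
  have S'eq: "S' = {y \<in> S. x \<bullet> y = 0}"
    unfolding S'_def by (auto simp: span_singleton orthogonal_def)
  have subS': "subspace S'" unfolding S'eq using Suc.prems(1)
    by (auto simp: subspace_def inner_add_right)
  have invS': "\<forall>y\<in>S'. A *v y \<in> S'"
  proof
    fix y assume "y \<in> S'"
    hence yS: "y \<in> S" and xy: "x \<bullet> y = 0" unfolding S'eq by auto
    have "x \<bullet> (A *v y) = y \<bullet> (A *v x)" by (rule symm)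
    also have "\<dots> = 0" using ev xy by (metis inner_commute inner_scaleR_right mult_zero_right)
    finally show "A *v y \<in> S'" unfolding S'eq using Suc.prems(2) yS by auto
  qed
  have "dim S' + dim (span {x}) = dim S"
    unfolding S'_def
    by (rule dim_subspace_orthogonal_to_vectors) (use Suc.prems(1) xS in \<open>auto simp: span_minimal\<close>)
  moreover have "dim (span {x}) = 1"
  proof -
    have "x \<noteq> 0" using nx by auto
    thus ?thesis by (simp add: dim_insert)
  qed
  ultimately have dS': "dim S' = n" using Suc.prems(3) by simp
  obtain B where B: "B \<subseteq> S'" "card B = n" "finite B" "pairwise orthogonal B"
      "\<forall>x\<in>B. norm x = 1 \<and> (\<exists>c. A *v x = c *\<^sub>R x)"
    using Suc.IH[OF subS' invS' dS'] by blast
  have xB: "x \<notin> B"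
  proof
    assume "x \<in> B" hence "x \<bullet> x = 0" using B(1) unfolding S'eq by auto
    thus False using nx by simp
  qed
  show ?case
  proof (intro exI[of _ "insert x B"] conjI)
    show "insert x B \<subseteq> S" using B(1) xS unfolding S'eq by auto
    show "card (insert x B) = Suc n" using B xB by simp
    show "finite (insert x B)" using B by simp
    show "pairwise orthogonal (insert x B)"
      using B(1,4) unfolding pairwise_insert S'eq
      by (auto simp: orthogonal_def inner_commute)
    show "\<forall>y\<in>insert x B. norm y = 1 \<and> (\<exists>c. A *v y = c *\<^sub>R y)" using B(5) nx ev by blast
  qed
qed

lemma spectral_sym:
  fixes A :: "real^'n^'n"
  assumes sym: "transpose A = A"
  obtains W :: "real^'n^'n" and th :: "'n \<Rightarrow> real" where "orthogonal_matrix W"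
    "\<And>j. A *v column j W = th j *\<^sub>R column j W"
proof -
  obtain B where B: "card B = CARD('n)" "finite B" "pairwise orthogonal B"
         "\<forall>x\<in>B. norm x = 1 \<and> (\<exists>c. A *v x = c *\<^sub>R x)"
    using eig_basis_subspace[OF sym, of UNIV "CARD('n)"] by (auto simp: dim_UNIV)
  obtain f where f: "bij_betw f (UNIV::'n set) B"
    using bij_betw_iff_card[of "UNIV::'n set" B] B by auto
  define W :: "real^'n^'n" where "W = (\<chi> i j. f j $ i)"
  have col: "column j W = f j" for j unfolding W_def column_def by (simp add: vec_eq_iff)
  have fB: "f j \<in> B" for j using f by (auto simp: bij_betw_def)
  have "orthogonal_matrix W"
    unfolding orthogonal_matrix_orthonormal_columns col
  proof (intro conjI allI impI)
    show "norm (f i) = 1" for i using B(4) fB by auto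
    show "orthogonal (f i) (f j)" if "i \<noteq> j" for i j
    proof -
      have "f i \<noteq> f j" using f that unfolding bij_betw_def inj_on_def by blast
      thus ?thesis using B(3) fB[of i] fB[of j] unfolding pairwise_def by blast
    qed
  qed
  moreover have "\<forall>j. \<exists>c. A *v f j = c *\<^sub>R f j"
    using B(4) fB by blast
  then obtain th where "\<And>j. A *v f j = th j *\<^sub>R f j" by metis
  ultimately show ?thesis using that col by metis
qed


lemma L2_meas: "L2 I f \<Longrightarrow> f \<in> borel_measurable lborel"
  by (simp add: L2_def)

lemma L2_prod_int:
  assumes I: "I \<in> sets lborel" and f: "L2 I f" and g: "L2 I g"
  shows "set_integrable lborel I (\<lambda>u. f u * g u)"
proof (rule set_integrable_bound)
  show "set_integrable lborel I (\<lambda>u. (f u)\<^sup>2 + (g u)\<^sup>2)"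
    using f g unfolding L2_def by (intro set_integral_add(1)) auto
  show "set_borel_measurable lborel I (\<lambda>u. f u * g u)"
  proof -
    have [measurable]: "f \<in> borel_measurable borel" "g \<in> borel_measurable borel" "I \<in> sets borel"
      using f g I unfolding L2_def by auto
    show ?thesis unfolding set_borel_measurable_def by measurable
  qed
  show "AE x in lborel. x \<in> I \<longrightarrow> norm (f x * g x) \<le> norm ((f x)\<^sup>2 + (g x)\<^sup>2)"
  proof (intro AE_I2 impI)
    fix x
    have "\<bar>f x * g x\<bar> \<le> (f x)\<^sup>2 + (g x)\<^sup>2"
    proof -
      have "0 \<le> (\<bar>f x\<bar> - \<bar>g x\<bar>)\<^sup>2" by simp
      hence "2 * (\<bar>f x\<bar> * \<bar>g x\<bar>) \<le> (f x)\<^sup>2 + (g x)\<^sup>2"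
        by (simp add: power2_eq_square algebra_simps)
      moreover have "0 \<le> \<bar>f x\<bar> * \<bar>g x\<bar>" by simp
      ultimately have "\<bar>f x\<bar> * \<bar>g x\<bar> \<le> (f x)\<^sup>2 + (g x)\<^sup>2" by linarith
      thus ?thesis by (simp add: abs_mult)
    qed
    thus "norm (f x * g x) \<le> norm ((f x)\<^sup>2 + (g x)\<^sup>2)" by simp
  qed
qed

lemma L2_add:
  assumes I: "I \<in> sets lborel" and f: "L2 I f" and g: "L2 I g"
  shows "L2 I (\<lambda>u. f u + g u)"
proof -
  have "set_integrable lborel I (\<lambda>u. (f u)\<^sup>2 + 2 * (f u * g u) + (g u)\<^sup>2)"
    using f g L2_prod_int[OF I f g] unfolding L2_def
    by (intro set_integral_add(1) set_integrable_mult_right) auto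
  moreover have "(\<lambda>u. (f u)\<^sup>2 + 2 * (f u * g u) + (g u)\<^sup>2) = (\<lambda>u. (f u + g u)\<^sup>2)"
    by (simp add: power2_eq_square algebra_simps)
  ultimately show ?thesis using f g unfolding L2_def by auto
qed

lemma L2_cmult:
  assumes f: "L2 I f" shows "L2 I (\<lambda>u. c * f u)"
proof -
  have "set_integrable lborel I (\<lambda>u. c\<^sup>2 * (f u)\<^sup>2)"
    using f unfolding L2_def by (intro set_integrable_mult_right) auto
  thus ?thesis using f unfolding L2_def by (auto simp: power_mult_distrib intro!: borel_measurable_times)
qed

lemma L2_zero: "L2 I (\<lambda>u. 0)"
  unfolding L2_def set_integrable_def by simp

lemma L2_sum:
  assumes I: "I \<in> sets lborel" and F: "\<And>j. j \<in> A \<Longrightarrow> L2 I (F j)"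
  shows "L2 I (\<lambda>u. \<Sum>j\<in>A. F j u)"
  using F
proof (induction A rule: infinite_finite_induct)
  case (infinite A) thus ?case by (simp add: L2_zero)
next
  case empty thus ?case by (simp add: L2_zero)
next
  case (insert x A)
  thus ?case using L2_add[OF I, of "F x" "\<lambda>u. \<Sum>j\<in>A. F j u"] by simp
qed

lemma l2_inner_sum_right:
  assumes I: "I \<in> sets lborel" and f: "L2 I f" and F: "\<And>j. L2 I (F j)"
  shows "l2_inner I f (\<lambda>u. \<Sum>j\<in>A. c j * F j u) = (\<Sum>j\<in>A. c j * l2_inner I f (F j))"
proof -
  have int: "integrable lborel (\<lambda>u. indicator I u * (f u * F j u))" for j
    using L2_prod_int[OF I f F[of j]] unfolding set_integrable_def by simp
  have "l2_inner I f (\<lambda>u. \<Sum>j\<in>A. c j * F j u)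
      = integral\<^sup>L lborel (\<lambda>u. \<Sum>j\<in>A. c j * (indicator I u * (f u * F j u)))"
    unfolding l2_inner_def set_lebesgue_integral_def
    by (rule Bochner_Integration.integral_cong) (auto simp: sum_distrib_left algebra_simps)
  also have "\<dots> = (\<Sum>j\<in>A. c j * integral\<^sup>L lborel (\<lambda>u. indicator I u * (f u * F j u)))"
    using int by (subst Bochner_Integration.integral_sum) auto
  finally show ?thesis unfolding l2_inner_def set_lebesgue_integral_def by simp
qed

lemma l2_inner_commute: "l2_inner I f g = l2_inner I g f"
  unfolding l2_inner_def by (simp add: mult.commute)

lemma l2_inner_sum_left:
  assumes I: "I \<in> sets lborel" and f: "L2 I f" and F: "\<And>j. L2 I (F j)"
  shows "l2_inner I (\<lambda>u. \<Sum>j\<in>A. c j * F j u) f = (\<Sum>j\<in>A. c j * l2_inner I (F j) f)"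
  using l2_inner_sum_right[OF I f F] by (simp add: l2_inner_commute)


lemma orth_cols:
  fixes W :: "real^'n^'n" assumes "orthogonal_matrix W"
  shows "(\<Sum>i\<in>UNIV. W$i$j * W$i$k) = (if j = k then 1 else 0)"
    and "(\<Sum>j\<in>UNIV. W$i$j * W$m$j) = (if i = m then 1 else 0)"
proof -
  have "transpose W ** W = mat 1" "W ** transpose W = mat 1" using assms by (auto simp: orthogonal_matrix_def)
  hence "(transpose W ** W)$j$k = mat 1 $j$k" "(W ** transpose W)$i$m = mat 1 $i$m" by auto
  thus "(\<Sum>i\<in>UNIV. W$i$j * W$i$k) = (if j = k then 1 else 0)"
    and "(\<Sum>j\<in>UNIV. W$i$j * W$m$j) = (if i = m then 1 else 0)"
    by (auto simp: matrix_matrix_mult_def transpose_def mat_def)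
qed

lemma kop_kernel:
  fixes L :: "real \<Rightarrow> real \<Rightarrow> real" and \<phi> :: "'d::finite \<Rightarrow> real \<Rightarrow> real" and C :: "real^'d^'d"
  assumes I: "I \<in> sets lborel"
    and phi_L2: "\<And>j. L2 I (\<phi> j)"
    and kern: "AE u in lborel. u \<in> I \<longrightarrow> ((\<lambda>v. indicator I v * L u v) \<in> borel_measurable lborel \<and>
               (AE v in lborel. v \<in> I \<longrightarrow> L u v = (\<Sum>i\<in>UNIV. \<Sum>l\<in>UNIV. \<phi> i u * C$i$l * \<phi> l v)))"
    and g: "L2 I g"
  shows "ae_eq_on I (kop I L g) (\<lambda>u. \<Sum>i\<in>UNIV. \<Sum>l\<in>UNIV. \<phi> i u * C$i$l * l2_inner I (\<phi> l) g)"
  unfolding ae_eq_on_def using kern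
proof eventually_elim
  case (elim u)
  show ?case
  proof
    assume uI: "u \<in> I"
    with elim have mL: "(\<lambda>v. indicator I v * L u v) \<in> borel_measurable lborel"
      and ae: "AE v in lborel. v \<in> I \<longrightarrow> L u v = (\<Sum>i\<in>UNIV. \<Sum>l\<in>UNIV. \<phi> i u * C$i$l * \<phi> l v)"
      by auto
    have mg: "g \<in> borel_measurable lborel" using g by (simp add: L2_def)
    have mphi: "\<phi> l \<in> borel_measurable lborel" for l using phi_L2 by (simp add: L2_def)
    have int: "integrable lborel (\<lambda>v. indicator I v * (\<phi> l v * g v))" for l
      using L2_prod_int[OF I phi_L2 g] unfolding set_integrable_def by simp
    have "kop I L g u = integral\<^sup>L lborel (\<lambda>v. (indicator I v * L u v) * g v)"
      unfolding kop_def set_lebesgue_integral_def by (simp add: mult.assoc)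
    also have "\<dots> = integral\<^sup>L lborel (\<lambda>v. \<Sum>i\<in>UNIV. \<Sum>l\<in>UNIV. (\<phi> i u * C$i$l) * (indicator I v * (\<phi> l v * g v)))"
    proof (rule integral_cong_AE)
      show "(\<lambda>v. indicator I v * L u v * g v) \<in> borel_measurable lborel"
        using mL mg by (rule borel_measurable_times)
      show "(\<lambda>v. \<Sum>i\<in>UNIV. \<Sum>l\<in>UNIV. (\<phi> i u * C$i$l) * (indicator I v * (\<phi> l v * g v))) \<in> borel_measurable lborel"
        by (intro borel_measurable_sum) (rule borel_measurable_times[OF borel_measurable_const borel_measurable_integrable[OF int]])
      show "AE v in lborel. indicator I v * L u v * g v = (\<Sum>i\<in>UNIV. \<Sum>l\<in>UNIV. (\<phi> i u * C$i$l) * (indicator I v * (\<phi> l v * g v)))"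
        using ae
      proof eventually_elim
        case (elim v)
        show ?case
        proof (cases "v \<in> I")
          case True
          thus ?thesis using elim by (simp add: sum_distrib_left sum_distrib_right algebra_simps)
        next
          case False thus ?thesis by simp
        qed
      qed
    qed
    also have "\<dots> = (\<Sum>i\<in>UNIV. \<Sum>l\<in>UNIV. (\<phi> i u * C$i$l) * integral\<^sup>L lborel (\<lambda>v. indicator I v * (\<phi> l v * g v)))"
      using int by (simp add: Bochner_Integration.integral_sum integrable_sum)
    finally show "kop I L g u = (\<Sum>i\<in>UNIV. \<Sum>l\<in>UNIV. \<phi> i u * C$i$l * l2_inner I (\<phi> l) g)"
      unfolding l2_inner_def set_lebesgue_integral_def by simp
  qed
qed

lemma generic_eigen:
  fixes L :: "real \<Rightarrow> real \<Rightarrow> real" and \<phi> :: "'d::finite \<Rightarrow> real \<Rightarrow> real" and C :: "real^'d^'d"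
  assumes I: "I \<in> sets lborel"
    and phi_L2: "\<And>j. L2 I (\<phi> j)"
    and phi_orth: "\<And>i j. l2_inner I (\<phi> i) (\<phi> j) = (if i = j then 1 else 0)"
    and sym: "transpose C = C"
    and pd: "\<And>x. x \<noteq> 0 \<Longrightarrow> x \<bullet> (C *v x) > 0"
    and kern: "AE u in lborel. u \<in> I \<longrightarrow> ((\<lambda>v. indicator I v * L u v) \<in> borel_measurable lborel \<and>
               (AE v in lborel. v \<in> I \<longrightarrow> L u v = (\<Sum>i\<in>UNIV. \<Sum>l\<in>UNIV. \<phi> i u * C$i$l * \<phi> l v)))"
  shows "nonzero_eigenspace_is I L \<phi>"
proof -
  obtain W :: "real^'d^'d" and th where W: "orthogonal_matrix W"
    and ev: "\<And>j. C *v column j W = th j *\<^sub>R column j W"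
    using spectral_sym[OF sym] by blast
  note oc = orth_cols[OF W]
  have evc: "(\<Sum>l\<in>UNIV. C$i$l * W$l$j) = th j * W$i$j" for i j
  proof -
    have "(C *v column j W)$i = (th j *\<^sub>R column j W)$i" using ev by simp
    thus ?thesis by (simp add: matrix_vector_mult_def column_def)
  qed
  define \<psi> where "\<psi> j u = (\<Sum>i\<in>UNIV. W$i$j * \<phi> i u)" for j u
  have psi_L2: "L2 I (\<psi> j)" for j
    unfolding \<psi>_def by (intro L2_sum[OF I] L2_cmult phi_L2)
  have inner_phi_psi: "l2_inner I (\<phi> l) (\<psi> j) = W$l$j" for l j
    unfolding \<psi>_def using l2_inner_sum_right[where F=\<phi> and c="\<lambda>i. W$i$j" and A=UNIV, OF I phi_L2[of l] phi_L2]
    by (simp add: phi_orth if_distrib cong: if_cong)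
  have inner_psi: "l2_inner I (\<psi> i) (\<psi> j) = (if i = j then 1 else 0)" for i j
  proof -
    have "l2_inner I (\<psi> i) (\<psi> j) = (\<Sum>l\<in>UNIV. W$l$i * l2_inner I (\<phi> l) (\<psi> j))"
      unfolding \<psi>_def[of i] by (rule l2_inner_sum_left[where F=\<phi>, OF I psi_L2 phi_L2])
    also have "\<dots> = (\<Sum>l\<in>UNIV. W$l$i * W$l$j)" by (simp add: inner_phi_psi)
    finally show ?thesis using oc(1) by simp
  qed
  have phi_exp: "\<phi> i u = (\<Sum>j\<in>UNIV. W$i$j * \<psi> j u)" for i u
  proof -
    have "(\<Sum>j\<in>UNIV. W$i$j * \<psi> j u) = (\<Sum>j\<in>UNIV. \<Sum>m\<in>UNIV. W$i$j * W$m$j * \<phi> m u)"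
      unfolding \<psi>_def by (simp add: sum_distrib_left mult.assoc)
    also have "\<dots> = (\<Sum>m\<in>UNIV. (\<Sum>j\<in>UNIV. W$i$j * W$m$j) * \<phi> m u)"
      by (subst sum.swap) (simp add: sum_distrib_right)
    also have "\<dots> = (\<Sum>m\<in>UNIV. (if i = m then 1 else 0) * \<phi> m u)"
      by (simp only: oc(2))
    also have "\<dots> = \<phi> i u" by (simp add: mult_if_delta)
    finally show ?thesis by simp
  qed
  have th_pos: "th j > 0" for j
  proof -
    have n1: "norm (column j W) = 1" using W by (simp add: orthogonal_matrix_orthonormal_columns)
    hence "column j W \<noteq> 0" by auto
    hence "column j W \<bullet> (C *v column j W) > 0" by (rule pd)
    also have "column j W \<bullet> (C *v column j W) = th j" using ev n1
      by (simp add: norm_eq_1)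
    finally show ?thesis .
  qed
  have eig: "eigenpair I L (th j) (\<psi> j)" for j
    unfolding eigenpair_def
  proof (intro conjI)
    show "L2 I (\<psi> j)" by (rule psi_L2)
    show "\<not> ae_eq_on I (\<psi> j) (\<lambda>_. 0)"
    proof
      assume "ae_eq_on I (\<psi> j) (\<lambda>_. 0)"
      hence "AE v in lborel. indicator I v * (\<psi> j v * \<psi> j v) = 0"
        unfolding ae_eq_on_def by (auto elim!: eventually_mono simp: indicator_def)
      hence "l2_inner I (\<psi> j) (\<psi> j) = 0"
        unfolding l2_inner_def set_lebesgue_integral_def by (simp add: integral_eq_zero_AE)
      thus False using inner_psi[of j j] by simp
    qed
    have "ae_eq_on I (kop I L (\<psi> j)) (\<lambda>u. \<Sum>i\<in>UNIV. \<Sum>l\<in>UNIV. \<phi> i u * C$i$l * l2_inner I (\<phi> l) (\<psi> j))"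
      by (rule kop_kernel[OF I phi_L2 kern psi_L2])
    moreover have "(\<Sum>i\<in>UNIV. \<Sum>l\<in>UNIV. \<phi> i u * C$i$l * l2_inner I (\<phi> l) (\<psi> j)) = th j * \<psi> j u" for u
    proof -
      have "(\<Sum>i\<in>UNIV. \<Sum>l\<in>UNIV. \<phi> i u * C$i$l * l2_inner I (\<phi> l) (\<psi> j))
           = (\<Sum>i\<in>UNIV. \<phi> i u * (\<Sum>l\<in>UNIV. C$i$l * W$l$j))"
        by (simp add: inner_phi_psi sum_distrib_left mult.assoc)
      also have "\<dots> = th j * \<psi> j u" unfolding evc \<psi>_def
        by (simp add: sum_distrib_left algebra_simps)
      finally show ?thesis .
    qed
    ultimately show "ae_eq_on I (kop I L (\<psi> j)) (\<lambda>u. th j * \<psi> j u)" by simp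
  qed
  show ?thesis
    unfolding nonzero_eigenspace_is_def
  proof (intro exI[of _ th] exI[of _ \<psi>] conjI allI impI)
    show "th j \<noteq> 0" for j using th_pos[of j] by simp
    show "eigenpair I L (th j) (\<psi> j)" for j using eig[of j] by simp
    show "l2_inner I (\<psi> i) (\<psi> j) = (if i = j then 1 else 0)" for i j by (rule inner_psi)
    show "in_span_L2 I \<phi> (\<psi> j)" for j
      unfolding in_span_L2_def ae_eq_on_def by (intro exI[of _ "\<lambda>i. W$i$j"]) (simp add: \<psi>_def)
    show "in_span_L2 I \<psi> (\<phi> j)" for j
      unfolding in_span_L2_def ae_eq_on_def by (intro exI[of _ "\<lambda>i. W$j$i"]) (simp add: phi_exp[of j])
    fix \<theta>' g assume a: "\<theta>' \<noteq> 0 \<and> eigenpair I L \<theta>' g"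
    hence gL2: "L2 I g" and ge: "ae_eq_on I (kop I L g) (\<lambda>u. \<theta>' * g u)" and t0: "\<theta>' \<noteq> 0"
      unfolding eigenpair_def by auto
    define a where "a i = (\<Sum>l\<in>UNIV. C$i$l * l2_inner I (\<phi> l) g) / \<theta>'" for i
    have "ae_eq_on I (kop I L g) (\<lambda>u. \<Sum>i\<in>UNIV. \<Sum>l\<in>UNIV. \<phi> i u * C$i$l * l2_inner I (\<phi> l) g)"
      by (rule kop_kernel[OF I phi_L2 kern gL2])
    with ge have "AE u in lborel. u \<in> I \<longrightarrow> g u = (\<Sum>j\<in>UNIV. (\<Sum>i\<in>UNIV. a i * W$i$j) * \<psi> j u)"
      unfolding ae_eq_on_def
    proof eventually_elim
      case (elim u)
      show ?case
      proof
        assume "u \<in> I"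
        with elim have "\<theta>' * g u = (\<Sum>i\<in>UNIV. \<Sum>l\<in>UNIV. \<phi> i u * C$i$l * l2_inner I (\<phi> l) g)" by simp
        hence "g u = (\<Sum>i\<in>UNIV. \<Sum>l\<in>UNIV. \<phi> i u * C$i$l * l2_inner I (\<phi> l) g) / \<theta>'"
          using t0 by (simp add: field_simps)
        also have "\<dots> = (\<Sum>i\<in>UNIV. a i * \<phi> i u)"
          unfolding a_def by (simp add: sum_divide_distrib sum_distrib_left sum_distrib_right algebra_simps)
        also have "\<dots> = (\<Sum>i\<in>UNIV. \<Sum>j\<in>UNIV. a i * W$i$j * \<psi> j u)"
          by (subst phi_exp) (simp add: sum_distrib_left mult.assoc)
        also have "\<dots> = (\<Sum>j\<in>UNIV. (\<Sum>i\<in>UNIV. a i * W$i$j) * \<psi> j u)"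
          by (subst sum.swap) (simp add: sum_distrib_right)
        finally show "g u = (\<Sum>j\<in>UNIV. (\<Sum>i\<in>UNIV. a i * W$i$j) * \<psi> j u)" .
      qed
    qed
    thus "in_span_L2 I \<psi> g" unfolding in_span_L2_def ae_eq_on_def
      by (intro exI[of _ "\<lambda>j. \<Sum>i\<in>UNIV. a i * W$i$j"])
  qed
qed


lemma prod_sep:
  fixes f g :: "real \<Rightarrow> real"
  assumes f: "integrable lborel f" and g: "integrable lborel g"
  shows "integrable (lborel \<Otimes>\<^sub>M lborel) (\<lambda>x. f (fst x) * g (snd x))"
    and "integral\<^sup>L (lborel \<Otimes>\<^sub>M lborel) (\<lambda>x. f (fst x) * g (snd x)) = integral\<^sup>L lborel f * integral\<^sup>L lborel g"
proof -
  have [measurable]: "f \<in> borel_measurable borel" "g \<in> borel_measurable borel"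
    using f g by auto
  show int: "integrable (lborel \<Otimes>\<^sub>M lborel) (\<lambda>x. f (fst x) * g (snd x))"
  proof (rule lborel_pair.Fubini_integrable)
    show "(\<lambda>x. f (fst x) * g (snd x)) \<in> borel_measurable (lborel \<Otimes>\<^sub>M lborel)" by measurable
    have "(\<lambda>x. \<integral>y. norm (f (fst (x, y)) * g (snd (x, y))) \<partial>lborel) = (\<lambda>x. \<bar>f x\<bar> * (\<integral>y. \<bar>g y\<bar> \<partial>lborel))"
      by (simp add: abs_mult)
    thus "integrable lborel (\<lambda>x. \<integral>y. norm (f (fst (x, y)) * g (snd (x, y))) \<partial>lborel)"
      using f by simp
    show "AE x in lborel. integrable lborel (\<lambda>y. f (fst (x, y)) * g (snd (x, y)))"
      using g by simp
  qed
  have "integral\<^sup>L (lborel \<Otimes>\<^sub>M lborel) (\<lambda>x. f (fst x) * g (snd x))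
      = integral\<^sup>L (lborel \<Otimes>\<^sub>M lborel) (\<lambda>(x,y). f x * g y)"
    by (simp add: split_beta')
  also have "\<dots> = (\<integral>x. (\<integral>y. f x * g y \<partial>lborel) \<partial>lborel)"
    using int by (subst lborel_pair.integral_fst) (simp_all add: split_beta')
  also have "\<dots> = integral\<^sup>L lborel f * integral\<^sup>L lborel g"
    by simp
  finally show "integral\<^sup>L (lborel \<Otimes>\<^sub>M lborel) (\<lambda>x. f (fst x) * g (snd x)) = integral\<^sup>L lborel f * integral\<^sup>L lborel g" .
qed


locale curve =
  fixes P :: "'w measure" and I :: "real set" and a b :: real
    and X :: "int \<Rightarrow> 'w \<Rightarrow> real \<Rightarrow> real" and \<mu> :: "real \<Rightarrow> real"
    and M :: "nat \<Rightarrow> real \<Rightarrow> real \<Rightarrow> real"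
    and lam :: "'d::finite \<Rightarrow> real" and \<phi> :: "'d \<Rightarrow> real \<Rightarrow> real"
  assumes prob: "prob_space P"
    and I_def: "I = {a..b}"
    and X_meas: "\<And>t. (\<lambda>(\<omega>, u). X t \<omega> u) \<in> borel_measurable (P \<Otimes>\<^sub>M lborel)"
    and momX: "\<And>t. (\<integral>\<^sup>+ u\<in>I. (\<integral>\<^sup>+ \<omega>. ennreal ((X t \<omega> u)\<^sup>2) \<partial>P) \<partial>lborel) < \<infinity>"
    and mean: "\<And>t u. u \<in> I \<Longrightarrow> (\<integral>\<omega>. X t \<omega> u \<partial>P) = \<mu> u"
    and cov: "\<And>t k u v. u \<in> I \<Longrightarrow> v \<in> I \<Longrightarrow>
          (\<integral>\<omega>. (X t \<omega> u - \<mu> u) * (X (t + int k) \<omega> v - \<mu> v) \<partial>P) = M k u v"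
    and phi_L2: "\<And>j. L2 I (\<phi> j)"
    and phi_orth: "\<And>i j. l2_inner I (\<phi> i) (\<phi> j) = (if i = j then 1 else 0)"
    and spectral: "AE x in lborel \<Otimes>\<^sub>M lborel. fst x \<in> I \<longrightarrow> snd x \<in> I \<longrightarrow>
          M 0 (fst x) (snd x) = (\<Sum>j\<in>UNIV. lam j * \<phi> j (fst x) * \<phi> j (snd x))"
begin

sublocale P: prob_space P by (rule prob)

sublocale PL: pair_sigma_finite P lborel
  unfolding pair_sigma_finite_def
  using P.sigma_finite_measure_axioms sigma_finite_lborel by simp

sublocale PLL: pair_sigma_finite P "lborel \<Otimes>\<^sub>M lborel"
  unfolding pair_sigma_finite_def
  by (intro conjI P.sigma_finite_measure_axioms sigma_finite_pair_measure sigma_finite_lborel)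

sublocale LLP: pair_sigma_finite "lborel \<Otimes>\<^sub>M lborel" P
  unfolding pair_sigma_finite_def
  by (intro conjI P.sigma_finite_measure_axioms sigma_finite_pair_measure sigma_finite_lborel)

sublocale LP: pair_sigma_finite lborel P
  unfolding pair_sigma_finite_def
  using P.sigma_finite_measure_axioms sigma_finite_lborel by simp

lemma I_sets[measurable]: "I \<in> sets borel" by (simp add: I_def)
lemma I_sets': "I \<in> sets lborel" by (simp add: I_def)
lemma I_fin: "emeasure lborel I < \<infinity>" by (simp add: I_def emeasure_lborel_Icc_eq)

declare X_meas[measurable]

definition mu0 where "mu0 u = (\<integral>\<omega>. X 0 \<omega> u \<partial>P)"
definition Z where "Z t \<omega> u = indicator I u * (X t \<omega> u - mu0 u)"
definition Q where "Q t g \<omega> = (\<integral>u. Z t \<omega> u * g u \<partial>lborel)"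
definition Mh where "Mh k u v = indicator I u * indicator I v * M k u v"

lemma mu_eq: "u \<in> I \<Longrightarrow> \<mu> u = mu0 u"
  using mean[of u 0] by (simp add: mu0_def)

lemma mean': "u \<in> I \<Longrightarrow> (\<integral>\<omega>. X t \<omega> u \<partial>P) = mu0 u"
  using mean mu_eq by simp

lemma mu0_meas[measurable]: "mu0 \<in> borel_measurable borel"
proof -
  have "(\<lambda>u. \<integral>\<omega>. X 0 \<omega> u \<partial>P) \<in> borel_measurable lborel"
    by (rule P.borel_measurable_lebesgue_integral) measurable
  thus ?thesis unfolding mu0_def by simp
qed

lemma Z_meas[measurable]: "(\<lambda>x. Z t (fst x) (snd x)) \<in> borel_measurable (P \<Otimes>\<^sub>M lborel)"
  unfolding Z_def by measurable

lemma Z_meas_split[measurable]: "(\<lambda>(\<omega>,u). Z t \<omega> u) \<in> borel_measurable (P \<Otimes>\<^sub>M lborel)"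
  using Z_meas by (simp add: split_beta')


lemma Mh_eq: "Mh k u v = (\<integral>\<omega>. Z t \<omega> u * Z (t + int k) \<omega> v \<partial>P)"
proof (cases "u \<in> I \<and> v \<in> I")
  case True
  hence "(\<lambda>\<omega>. Z t \<omega> u * Z (t + int k) \<omega> v) = (\<lambda>\<omega>. (X t \<omega> u - \<mu> u) * (X (t + int k) \<omega> v - \<mu> v))"
    by (auto simp: Z_def mu_eq)
  thus ?thesis using True cov[of u v t k] by (simp add: Mh_def)
next
  case False
  thus ?thesis by (auto simp: Mh_def Z_def)
qed

lemma Mh_meas[measurable]: "(\<lambda>x. Mh k (fst x) (snd x)) \<in> borel_measurable (lborel \<Otimes>\<^sub>M lborel)"
proof -
  have "(\<lambda>x. \<integral>\<omega>. Z 0 \<omega> (fst x) * Z (0 + int k) \<omega> (snd x) \<partial>P) \<in> borel_measurable (lborel \<Otimes>\<^sub>M lborel)"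
    by (rule P.borel_measurable_lebesgue_integral) measurable
  thus ?thesis by (subst Mh_eq[where t=0]) 
qed

lemma ennreal_2sum: "0 \<le> A \<Longrightarrow> 0 \<le> B \<Longrightarrow> ennreal (2*A + 2*B) = 2 * ennreal A + 2 * ennreal B"
  by (subst ennreal_plus) (auto simp: ennreal_mult)

lemma mu0_sq_le:
  assumes uI: "u \<in> I"
  shows "ennreal ((mu0 u)\<^sup>2) \<le> (\<integral>\<^sup>+\<omega>. ennreal ((X t \<omega> u)\<^sup>2) \<partial>P)"
proof (cases "integrable P (\<lambda>\<omega>. X t \<omega> u)")
  case True
  have [measurable]: "(\<lambda>\<omega>. X t \<omega> u) \<in> borel_measurable P" by measurable
  have "ennreal \<bar>mu0 u\<bar> \<le> (\<integral>\<^sup>+\<omega>. ennreal \<bar>X t \<omega> u\<bar> \<partial>P)"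
    using integral_norm_bound_ennreal[OF True] mean'[OF uI, of t] by simp
  hence "(ennreal \<bar>mu0 u\<bar>)\<^sup>2 \<le> (\<integral>\<^sup>+\<omega>. ennreal \<bar>X t \<omega> u\<bar> * 1 \<partial>P)\<^sup>2"
    by (simp add: power_mono)
  also have "\<dots> \<le> (\<integral>\<^sup>+\<omega>. (ennreal \<bar>X t \<omega> u\<bar>)^2 \<partial>P) * (\<integral>\<^sup>+\<omega>. 1 ^ 2 \<partial>P)"
    by (rule Cauchy_Schwarz_nn_integral) measurable
  also have "\<dots> = (\<integral>\<^sup>+\<omega>. ennreal ((X t \<omega> u)\<^sup>2) \<partial>P)"
  proof -
    have "(ennreal \<bar>x\<bar>)^2 = ennreal (x^2)" for x :: real by (subst ennreal_power) auto
    thus ?thesis by (simp add: P.emeasure_space_1)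
  qed
  finally show ?thesis by (simp add: ennreal_power)
next
  case False
  hence "mu0 u = 0" using mean'[OF uI, of t] by (simp add: not_integrable_integral_eq)
  thus ?thesis by simp
qed

lemma mom: "(\<integral>\<^sup>+\<omega>. \<integral>\<^sup>+u. ennreal ((Z t \<omega> u)\<^sup>2) \<partial>lborel \<partial>P) < \<infinity>"
proof -
  have "(\<integral>\<^sup>+\<omega>. \<integral>\<^sup>+u. ennreal ((Z t \<omega> u)\<^sup>2) \<partial>lborel \<partial>P) = (\<integral>\<^sup>+u. \<integral>\<^sup>+\<omega>. ennreal ((Z t \<omega> u)\<^sup>2) \<partial>P \<partial>lborel)"
    by (rule PL.Fubini'[symmetric]) measurable
  also have "\<dots> \<le> (\<integral>\<^sup>+u. 4 * ((\<integral>\<^sup>+\<omega>. ennreal ((X t \<omega> u)\<^sup>2) \<partial>P) * indicator I u) \<partial>lborel)"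
  proof (rule nn_integral_mono)
    fix u
    show "(\<integral>\<^sup>+\<omega>. ennreal ((Z t \<omega> u)\<^sup>2) \<partial>P) \<le> 4 * ((\<integral>\<^sup>+\<omega>. ennreal ((X t \<omega> u)\<^sup>2) \<partial>P) * indicator I u)"
    proof (cases "u \<in> I")
      case False thus ?thesis by (simp add: Z_def)
    next
      case True
      have [measurable]: "(\<lambda>\<omega>. X t \<omega> u) \<in> borel_measurable P" by measurable
      have "(\<integral>\<^sup>+\<omega>. ennreal ((Z t \<omega> u)\<^sup>2) \<partial>P) \<le> (\<integral>\<^sup>+\<omega>. 2 * ennreal ((X t \<omega> u)\<^sup>2) + 2 * ennreal ((mu0 u)\<^sup>2) \<partial>P)"
      proof (rule nn_integral_mono)
        fix \<omega>
        have "(X t \<omega> u - mu0 u)\<^sup>2 \<le> 2 * (X t \<omega> u)\<^sup>2 + 2 * (mu0 u)\<^sup>2"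
        proof -
          have "0 \<le> (X t \<omega> u + mu0 u)\<^sup>2" by simp
          thus ?thesis by (simp add: power2_eq_square algebra_simps)
        qed
        hence "ennreal ((X t \<omega> u - mu0 u)\<^sup>2) \<le> ennreal (2 * (X t \<omega> u)\<^sup>2 + 2 * (mu0 u)\<^sup>2)"
          by (rule ennreal_leI)
        also have "\<dots> = 2 * ennreal ((X t \<omega> u)\<^sup>2) + 2 * ennreal ((mu0 u)\<^sup>2)"
          by (rule ennreal_2sum) auto
        finally show "ennreal ((Z t \<omega> u)\<^sup>2) \<le> 2 * ennreal ((X t \<omega> u)\<^sup>2) + 2 * ennreal ((mu0 u)\<^sup>2)"
          using True by (simp add: Z_def)
      qed
      also have "\<dots> = 2 * (\<integral>\<^sup>+\<omega>. ennreal ((X t \<omega> u)\<^sup>2) \<partial>P) + 2 * ennreal ((mu0 u)\<^sup>2)"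
        by (simp add: nn_integral_add nn_integral_cmult P.emeasure_space_1)
      also have "\<dots> \<le> 2 * (\<integral>\<^sup>+\<omega>. ennreal ((X t \<omega> u)\<^sup>2) \<partial>P) + 2 * (\<integral>\<^sup>+\<omega>. ennreal ((X t \<omega> u)\<^sup>2) \<partial>P)"
        using mu0_sq_le[OF True, of t] by (intro add_left_mono mult_left_mono) auto
      also have "\<dots> = 4 * ((\<integral>\<^sup>+\<omega>. ennreal ((X t \<omega> u)\<^sup>2) \<partial>P) * indicator I u)"
        using True by (simp add: distrib_right[symmetric])
      finally show ?thesis .
    qed
  qed
  also have "\<dots> = 4 * (\<integral>\<^sup>+ u\<in>I. (\<integral>\<^sup>+ \<omega>. ennreal ((X t \<omega> u)\<^sup>2) \<partial>P) \<partial>lborel)"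
    by (rule nn_integral_cmult) measurable
  also have "\<dots> < \<infinity>" using momX[of t] by (simp add: ennreal_mult_less_top)
  finally show ?thesis .
qed

end


lemma nn_prod_sep:
  fixes f g :: "real \<Rightarrow> ennreal"
  assumes [measurable]: "f \<in> borel_measurable borel" "g \<in> borel_measurable borel"
  shows "(\<integral>\<^sup>+x. f (fst x) * g (snd x) \<partial>(lborel \<Otimes>\<^sub>M lborel)) = (\<integral>\<^sup>+x. f x \<partial>lborel) * (\<integral>\<^sup>+x. g x \<partial>lborel)"
proof -
  have "(\<integral>\<^sup>+x. f (fst x) * g (snd x) \<partial>(lborel \<Otimes>\<^sub>M lborel)) = (\<integral>\<^sup>+x. \<integral>\<^sup>+y. f x * g y \<partial>lborel \<partial>lborel)"
    by (subst lborel.nn_integral_fst[symmetric]) (auto simp: split_beta')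
  also have "\<dots> = (\<integral>\<^sup>+x. f x * (\<integral>\<^sup>+y. g y \<partial>lborel) \<partial>lborel)"
    by (simp add: nn_integral_cmult)
  also have "\<dots> = (\<integral>\<^sup>+x. f x \<partial>lborel) * (\<integral>\<^sup>+x. g x \<partial>lborel)"
    by (simp add: nn_integral_multc)
  finally show ?thesis .
qed

lemma abs_prod_le: "\<bar>x * y\<bar> \<le> x\<^sup>2 + y\<^sup>2" for x y :: real
proof -
  have "0 \<le> (\<bar>x\<bar> - \<bar>y\<bar>)\<^sup>2" by simp
  hence "2 * (\<bar>x\<bar> * \<bar>y\<bar>) \<le> x\<^sup>2 + y\<^sup>2"
    by (simp add: power2_eq_square algebra_simps)
  moreover have "0 \<le> \<bar>x\<bar> * \<bar>y\<bar>" by simp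
  ultimately have "\<bar>x\<bar> * \<bar>y\<bar> \<le> x\<^sup>2 + y\<^sup>2" by linarith
  thus ?thesis by (simp add: abs_mult)
qed

context curve begin

definition good where "good t \<omega> \<longleftrightarrow> \<omega> \<in> space P \<and> integrable lborel (\<lambda>u. (Z t \<omega> u)\<^sup>2)"

lemma Z_sect[measurable]: "\<omega> \<in> space P \<Longrightarrow> (\<lambda>u. Z t \<omega> u) \<in> borel_measurable lborel"
  using measurable_compose[OF measurable_Pair1' Z_meas_split] by simp

lemma AE_good: "AE \<omega> in P. good t \<omega>"
proof -
  have m: "(\<lambda>\<omega>. \<integral>\<^sup>+u. ennreal ((Z t \<omega> u)\<^sup>2) \<partial>lborel) \<in> borel_measurable P" by measurable
  have "AE \<omega> in P. (\<integral>\<^sup>+u. ennreal ((Z t \<omega> u)\<^sup>2) \<partial>lborel) \<noteq> \<infinity>"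
    using mom[of t] by (intro nn_integral_PInf_AE[OF m]) auto
  with AE_space show ?thesis
  proof eventually_elim
    case (elim \<omega>)
    have [measurable]: "(\<lambda>u. Z t \<omega> u) \<in> borel_measurable lborel" using elim by simp
    show ?case unfolding good_def using elim apply simp
      by (rule integrableI_bounded) (use elim in \<open>auto simp: top.not_eq_extremum\<close>)
  qed
qed

lemma L2_ind_fin:
  assumes "L2 I g" shows "(\<integral>\<^sup>+u. ennreal ((indicator I u * g u)\<^sup>2) \<partial>lborel) < \<infinity>"
proof -
  have "integrable lborel (\<lambda>x. indicator I x * (g x)\<^sup>2)" using assms unfolding L2_def set_integrable_def by simp
  hence "(\<integral>\<^sup>+x. ennreal (norm (indicator I x * (g x)\<^sup>2)) \<partial>lborel) < \<infinity>" by (rule conjunct2[OF iffD1[OF integrable_iff_bounded]])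
  also have "(\<integral>\<^sup>+x. ennreal (norm (indicator I x * (g x)\<^sup>2)) \<partial>lborel) = (\<integral>\<^sup>+u. ennreal ((indicator I u * g u)\<^sup>2) \<partial>lborel)"
    by (intro nn_integral_cong) (simp add: indicator_def)
  finally show ?thesis .
qed

lemma L2_meas'[measurable_dest]: "L2 I g \<Longrightarrow> g \<in> borel_measurable borel"
  by (simp add: L2_def)

lemma Zg_int:
  assumes gd: "good t \<omega>" and g: "L2 I g"
  shows "integrable lborel (\<lambda>u. Z t \<omega> u * g u)"
proof (rule Bochner_Integration.integrable_bound)
  show "integrable lborel (\<lambda>u. (Z t \<omega> u)\<^sup>2 + indicator I u * (g u)\<^sup>2)"
    using gd g unfolding good_def L2_def set_integrable_def by auto
  have [measurable]: "g \<in> borel_measurable borel" using g by (simp add: L2_def)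
  have [measurable]: "(\<lambda>u. Z t \<omega> u) \<in> borel_measurable lborel" using gd by (simp add: good_def)
  show "(\<lambda>u. Z t \<omega> u * g u) \<in> borel_measurable lborel" by measurable
  show "AE x in lborel. norm (Z t \<omega> x * g x) \<le> norm ((Z t \<omega> x)\<^sup>2 + indicator I x * (g x)\<^sup>2)"
  proof (intro AE_I2)
    fix x
    have "Z t \<omega> x * g x = Z t \<omega> x * (indicator I x * g x)" by (simp add: Z_def indicator_def)
    also have "\<bar>\<dots>\<bar> \<le> (Z t \<omega> x)\<^sup>2 + (indicator I x * g x)\<^sup>2" by (rule abs_prod_le)
    also have "\<dots> = (Z t \<omega> x)\<^sup>2 + indicator I x * (g x)\<^sup>2" by (simp add: indicator_def power_mult_distrib)
    finally show "norm (Z t \<omega> x * g x) \<le> norm ((Z t \<omega> x)\<^sup>2 + indicator I x * (g x)\<^sup>2)" by simp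
  qed
qed

lemma Q_meas[measurable]: "L2 I g \<Longrightarrow> Q t g \<in> borel_measurable P"
proof -
  assume g: "L2 I g"
  have [measurable]: "g \<in> borel_measurable borel" using g by (simp add: L2_def)
  have "(\<lambda>\<omega>. \<integral>u. Z t \<omega> u * g u \<partial>lborel) \<in> borel_measurable P"
    by (rule lborel.borel_measurable_lebesgue_integral) measurable
  thus ?thesis unfolding Q_def .
qed

end


lemma ennreal_ab: "0\<le>a \<Longrightarrow> 0\<le>b \<Longrightarrow> 0\<le>c \<Longrightarrow> 0\<le>d \<Longrightarrow>
  ennreal (a*b + c*d) = ennreal a * ennreal b + ennreal c * ennreal d"
  by (subst ennreal_plus) (auto simp: ennreal_mult)

context curve begin

lemma G1:
  assumes g: "L2 I g" and h: "L2 I h"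
  shows "integrable P (\<lambda>\<omega>. Q t g \<omega> * Q (t + int k) h \<omega>)"
    and "integrable (lborel \<Otimes>\<^sub>M lborel) (\<lambda>x. g (fst x) * h (snd x) * Mh k (fst x) (snd x))"
    and "(\<integral>\<omega>. Q t g \<omega> * Q (t + int k) h \<omega> \<partial>P) = (\<integral>x. g (fst x) * h (snd x) * Mh k (fst x) (snd x) \<partial>(lborel \<Otimes>\<^sub>M lborel))"
proof -
  define s where "s = t + int k"
  have [measurable]: "g \<in> borel_measurable borel" "h \<in> borel_measurable borel"
    using g h by (auto simp: L2_def)
  define F where "F \<omega> x = Z t \<omega> (fst x) * g (fst x) * (Z s \<omega> (snd x) * h (snd x))" for \<omega> x
  have Fm[measurable]: "case_prod F \<in> borel_measurable (P \<Otimes>\<^sub>M (lborel \<Otimes>\<^sub>M lborel))"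
    unfolding F_def split_beta' by measurable
  define gh where "gh u = indicator I u * g u" for u
  define hh where "hh u = indicator I u * h u" for u
  have [measurable]: "gh \<in> borel_measurable borel" "hh \<in> borel_measurable borel"
    unfolding gh_def hh_def by measurable
  define A where "A s' \<omega> = (\<integral>\<^sup>+u. ennreal ((Z s' \<omega> u)\<^sup>2) \<partial>lborel)" for s' \<omega>
  have Am[measurable]: "A s' \<in> borel_measurable P" for s' unfolding A_def by measurable
  define G where "G = (\<integral>\<^sup>+u. ennreal ((gh u)\<^sup>2) \<partial>lborel)"
  define H where "H = (\<integral>\<^sup>+u. ennreal ((hh u)\<^sup>2) \<partial>lborel)"
  have GH: "G < \<infinity>" "H < \<infinity>" unfolding G_def H_def gh_def hh_def using L2_ind_fin g h by auto
  have bound: "ennreal (norm (F \<omega> x)) \<le> ennreal ((Z t \<omega> (fst x))\<^sup>2) * ennreal ((hh (snd x))\<^sup>2)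
        + ennreal ((gh (fst x))\<^sup>2) * ennreal ((Z s \<omega> (snd x))\<^sup>2)" for \<omega> x
  proof -
    have "F \<omega> x = (Z t \<omega> (fst x) * hh (snd x)) * (gh (fst x) * Z s \<omega> (snd x))"
      unfolding F_def gh_def hh_def Z_def by (simp add: indicator_def)
    hence "norm (F \<omega> x) \<le> (Z t \<omega> (fst x) * hh (snd x))\<^sup>2 + (gh (fst x) * Z s \<omega> (snd x))\<^sup>2"
      using abs_prod_le by simp
    hence "ennreal (norm (F \<omega> x)) \<le> ennreal ((Z t \<omega> (fst x) * hh (snd x))\<^sup>2 + (gh (fst x) * Z s \<omega> (snd x))\<^sup>2)"
      by (rule ennreal_leI)
    also have "\<dots> = ennreal ((Z t \<omega> (fst x))\<^sup>2) * ennreal ((hh (snd x))\<^sup>2)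
        + ennreal ((gh (fst x))\<^sup>2) * ennreal ((Z s \<omega> (snd x))\<^sup>2)"
      unfolding power_mult_distrib by (rule ennreal_ab) auto
    finally show ?thesis .
  qed
  have inner: "(\<integral>\<^sup>+x. ennreal ((Z t \<omega> (fst x))\<^sup>2) * ennreal ((hh (snd x))\<^sup>2)
        + ennreal ((gh (fst x))\<^sup>2) * ennreal ((Z s \<omega> (snd x))\<^sup>2) \<partial>(lborel \<Otimes>\<^sub>M lborel))
      = A t \<omega> * H + G * A s \<omega>" if "\<omega> \<in> space P" for \<omega>
  proof -
    have [measurable]: "(\<lambda>u. Z t \<omega> u) \<in> borel_measurable borel" "(\<lambda>u. Z s \<omega> u) \<in> borel_measurable borel"
      using Z_sect[OF that] by auto
    have e1: "(\<integral>\<^sup>+x. ennreal ((Z t \<omega> (fst x))\<^sup>2) * ennreal ((hh (snd x))\<^sup>2) \<partial>(lborel \<Otimes>\<^sub>M lborel)) = A t \<omega> * H"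
      unfolding A_def H_def by (rule nn_prod_sep[of "\<lambda>u. ennreal ((Z t \<omega> u)\<^sup>2)" "\<lambda>u. ennreal ((hh u)\<^sup>2)"]) auto
    have e2: "(\<integral>\<^sup>+x. ennreal ((gh (fst x))\<^sup>2) * ennreal ((Z s \<omega> (snd x))\<^sup>2) \<partial>(lborel \<Otimes>\<^sub>M lborel)) = G * A s \<omega>"
      unfolding A_def G_def by (rule nn_prod_sep[of "\<lambda>u. ennreal ((gh u)\<^sup>2)" "\<lambda>u. ennreal ((Z s \<omega> u)\<^sup>2)"]) auto
    show ?thesis
      by (subst nn_integral_add) (auto simp: e1 e2)
  qed
  have "(\<integral>\<^sup>+p. ennreal (norm (case_prod F p)) \<partial>(P \<Otimes>\<^sub>M (lborel \<Otimes>\<^sub>M lborel)))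
      \<le> (\<integral>\<^sup>+p. ennreal ((Z t (fst p) (fst (snd p)))\<^sup>2) * ennreal ((hh (snd (snd p)))\<^sup>2)
        + ennreal ((gh (fst (snd p)))\<^sup>2) * ennreal ((Z s (fst p) (snd (snd p)))\<^sup>2) \<partial>(P \<Otimes>\<^sub>M (lborel \<Otimes>\<^sub>M lborel)))"
  proof (intro nn_integral_mono)
    fix p :: "'w \<times> real \<times> real"
    show "ennreal (norm (case_prod F p)) \<le> ennreal ((Z t (fst p) (fst (snd p)))\<^sup>2) * ennreal ((hh (snd (snd p)))\<^sup>2)
        + ennreal ((gh (fst (snd p)))\<^sup>2) * ennreal ((Z s (fst p) (snd (snd p)))\<^sup>2)"
      using bound[of "fst p" "snd p"] by (simp add: split_beta')
  qed
  also have "\<dots> = (\<integral>\<^sup>+\<omega>. \<integral>\<^sup>+x. ennreal ((Z t \<omega> (fst x))\<^sup>2) * ennreal ((hh (snd x))\<^sup>2)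
        + ennreal ((gh (fst x))\<^sup>2) * ennreal ((Z s \<omega> (snd x))\<^sup>2) \<partial>(lborel \<Otimes>\<^sub>M lborel) \<partial>P)"
    by (rule PLL.M2.nn_integral_fst[symmetric, where f="\<lambda>p. ennreal ((Z t (fst p) (fst (snd p)))\<^sup>2) * ennreal ((hh (snd (snd p)))\<^sup>2)
        + ennreal ((gh (fst (snd p)))\<^sup>2) * ennreal ((Z s (fst p) (snd (snd p)))\<^sup>2)", simplified]) measurable
  also have "\<dots> = (\<integral>\<^sup>+\<omega>. A t \<omega> * H + G * A s \<omega> \<partial>P)"
    by (intro nn_integral_cong) (simp add: inner)
  also have "\<dots> = (\<integral>\<^sup>+\<omega>. A t \<omega> \<partial>P) * H + G * (\<integral>\<^sup>+\<omega>. A s \<omega> \<partial>P)"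
    by (simp add: nn_integral_add nn_integral_cmult nn_integral_multc)
  also have "\<dots> < \<infinity>"
    using mom[of t] mom[of s] GH unfolding A_def by (simp add: ennreal_mult_less_top)
  finally have intF: "integrable (P \<Otimes>\<^sub>M (lborel \<Otimes>\<^sub>M lborel)) (case_prod F)"
    by (intro integrableI_bounded Fm)
  have fst_eq: "AE \<omega> in P. (\<integral>x. F \<omega> x \<partial>(lborel \<Otimes>\<^sub>M lborel)) = Q t g \<omega> * Q s h \<omega>"
    using AE_good[of t] AE_good[of s]
  proof eventually_elim
    case (elim \<omega>)
    show ?case unfolding F_def Q_def
      by (rule prod_sep(2)[OF Zg_int[OF elim(1) g] Zg_int[OF elim(2) h]])
  qed
  have m1: "(\<lambda>\<omega>. \<integral>x. F \<omega> x \<partial>(lborel \<Otimes>\<^sub>M lborel)) \<in> borel_measurable P"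
    using Fm by (rule PLL.M2.borel_measurable_lebesgue_integral)
  have m2: "(\<lambda>\<omega>. Q t g \<omega> * Q s h \<omega>) \<in> borel_measurable P" using g h by measurable
  show "integrable P (\<lambda>\<omega>. Q t g \<omega> * Q (t + int k) h \<omega>)"
    using integrable_cong_AE_imp[OF PLL.integrable_fst'[OF intF] m2] fst_eq unfolding s_def by simp
  have E1: "(\<integral>\<omega>. Q t g \<omega> * Q s h \<omega> \<partial>P) = integral\<^sup>L (P \<Otimes>\<^sub>M (lborel \<Otimes>\<^sub>M lborel)) (case_prod F)"
    using PLL.integral_fst'[OF intF] integral_cong_AE[OF m1 m2 fst_eq] by simp
  have snd_eq: "(\<integral>\<omega>. F \<omega> x \<partial>P) = g (fst x) * h (snd x) * Mh k (fst x) (snd x)" for x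
  proof -
    have "(\<integral>\<omega>. F \<omega> x \<partial>P) = (\<integral>\<omega>. (g (fst x) * h (snd x)) * (Z t \<omega> (fst x) * Z s \<omega> (snd x)) \<partial>P)"
      unfolding F_def by (simp add: algebra_simps)
    also have "\<dots> = g (fst x) * h (snd x) * Mh k (fst x) (snd x)"
      by (simp add: Mh_eq[of k _ _ t] s_def)
    finally show ?thesis .
  qed
  show "integrable (lborel \<Otimes>\<^sub>M lborel) (\<lambda>x. g (fst x) * h (snd x) * Mh k (fst x) (snd x))"
    using PLL.integrable_snd[OF intF] snd_eq by simp
  show "(\<integral>\<omega>. Q t g \<omega> * Q (t + int k) h \<omega> \<partial>P) = (\<integral>x. g (fst x) * h (snd x) * Mh k (fst x) (snd x) \<partial>(lborel \<Otimes>\<^sub>M lborel))"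
    using E1 PLL.integral_snd[OF intF] snd_eq unfolding s_def by simp
qed

end


lemma L2_diff: "I \<in> sets lborel \<Longrightarrow> L2 I f \<Longrightarrow> L2 I g \<Longrightarrow> L2 I (\<lambda>u. f u - g u)"
  using L2_add[of I f "\<lambda>u. (-1) * g u"] L2_cmult[of I g "-1"] by simp

lemma l2_inner_diff_left:
  assumes I: "I \<in> sets lborel" and f: "L2 I f" and g: "L2 I g" and h: "L2 I h"
  shows "l2_inner I (\<lambda>u. f u - g u) h = l2_inner I f h - l2_inner I g h"
proof -
  have "l2_inner I (\<lambda>u. f u - g u) h = (LINT u:I|lborel. f u * h u - g u * h u)"
    unfolding l2_inner_def by (simp add: algebra_simps)
  also have "\<dots> = l2_inner I f h - l2_inner I g h"
    unfolding l2_inner_def using L2_prod_int[OF I f h] L2_prod_int[OF I g h] by (rule set_integral_diff(2))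
  finally show ?thesis .
qed

context curve begin

lemma ind_fg_int: "L2 I f \<Longrightarrow> L2 I g \<Longrightarrow> integrable lborel (\<lambda>u. indicator I u * (f u * g u))"
  using L2_prod_int[OF I_sets'] unfolding set_integrable_def by simp

lemma G2:
  assumes g: "L2 I g" and h: "L2 I h"
  shows "(\<integral>x. g (fst x) * h (snd x) * Mh 0 (fst x) (snd x) \<partial>(lborel \<Otimes>\<^sub>M lborel))
       = (\<Sum>j\<in>UNIV. lam j * l2_inner I g (\<phi> j) * l2_inner I h (\<phi> j))"
proof -
  have [measurable]: "g \<in> borel_measurable borel" "h \<in> borel_measurable borel" "\<phi> j \<in> borel_measurable borel" for j
    using g h phi_L2 by (auto simp: L2_def)
  let ?T = "\<lambda>j x. lam j * ((indicator I (fst x) * (g (fst x) * \<phi> j (fst x))) * (indicator I (snd x) * (h (snd x) * \<phi> j (snd x))))"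
  have "(\<integral>x. g (fst x) * h (snd x) * Mh 0 (fst x) (snd x) \<partial>(lborel \<Otimes>\<^sub>M lborel))
      = (\<integral>x. (\<Sum>j\<in>UNIV. ?T j x) \<partial>(lborel \<Otimes>\<^sub>M lborel))"
  proof (rule integral_cong_AE)
    show "(\<lambda>x. g (fst x) * h (snd x) * Mh 0 (fst x) (snd x)) \<in> borel_measurable (lborel \<Otimes>\<^sub>M lborel)"
      by measurable
    show "(\<lambda>x. \<Sum>j\<in>UNIV. ?T j x) \<in> borel_measurable (lborel \<Otimes>\<^sub>M lborel)" by measurable
    show "AE x in lborel \<Otimes>\<^sub>M lborel. g (fst x) * h (snd x) * Mh 0 (fst x) (snd x) = (\<Sum>j\<in>UNIV. ?T j x)"
      using spectral
    proof eventually_elim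
      case (elim x)
      show ?case
      proof (cases "fst x \<in> I \<and> snd x \<in> I")
        case True
        with elim show ?thesis by (simp add: Mh_def sum_distrib_left algebra_simps)
      next
        case False thus ?thesis by (auto simp: Mh_def)
      qed
    qed
  qed
  also have "\<dots> = (\<Sum>j\<in>UNIV. lam j * ((\<integral>u. indicator I u * (g u * \<phi> j u) \<partial>lborel) * (\<integral>u. indicator I u * (h u * \<phi> j u) \<partial>lborel)))"
  proof -
    have int: "integrable (lborel \<Otimes>\<^sub>M lborel) (\<lambda>x. (indicator I (fst x) * (g (fst x) * \<phi> j (fst x))) * (indicator I (snd x) * (h (snd x) * \<phi> j (snd x))))" for j
      by (rule prod_sep(1)[OF ind_fg_int[OF g phi_L2] ind_fg_int[OF h phi_L2]])
    have eq: "(\<integral>x. (indicator I (fst x) * (g (fst x) * \<phi> j (fst x))) * (indicator I (snd x) * (h (snd x) * \<phi> j (snd x))) \<partial>(lborel \<Otimes>\<^sub>M lborel))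
       = (\<integral>u. indicator I u * (g u * \<phi> j u) \<partial>lborel) * (\<integral>u. indicator I u * (h u * \<phi> j u) \<partial>lborel)" for j
      by (rule prod_sep(2)[OF ind_fg_int[OF g phi_L2] ind_fg_int[OF h phi_L2]])
    show ?thesis using int eq by (simp add: Bochner_Integration.integral_sum)
  qed
  also have "\<dots> = (\<Sum>j\<in>UNIV. lam j * l2_inner I g (\<phi> j) * l2_inner I h (\<phi> j))"
    unfolding l2_inner_def set_lebesgue_integral_def by (simp add: mult.assoc)
  finally show ?thesis .
qed

lemma expand:
  assumes f: "L2 I f"
  shows "AE \<omega> in P. Q t f \<omega> = (\<Sum>i\<in>UNIV. l2_inner I (\<phi> i) f * Q t (\<phi> i) \<omega>)"
proof -
  define c where "c i = l2_inner I (\<phi> i) f" for i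
  define r where "r u = f u - (\<Sum>i\<in>UNIV. c i * \<phi> i u)" for u
  have Sphi: "L2 I (\<lambda>u. \<Sum>i\<in>UNIV. c i * \<phi> i u)"
    by (intro L2_sum[OF I_sets'] L2_cmult phi_L2)
  have r: "L2 I r" unfolding r_def by (rule L2_diff[OF I_sets' f Sphi])
  have rphi: "l2_inner I r (\<phi> j) = 0" for j
  proof -
    have "l2_inner I r (\<phi> j) = l2_inner I f (\<phi> j) - l2_inner I (\<lambda>u. \<Sum>i\<in>UNIV. c i * \<phi> i u) (\<phi> j)"
      unfolding r_def by (rule l2_inner_diff_left[OF I_sets' f Sphi phi_L2])
    also have "l2_inner I (\<lambda>u. \<Sum>i\<in>UNIV. c i * \<phi> i u) (\<phi> j) = (\<Sum>i\<in>UNIV. c i * l2_inner I (\<phi> i) (\<phi> j))"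
      by (rule l2_inner_sum_left[where F=\<phi>, OF I_sets' phi_L2 phi_L2])
    also have "\<dots> = c j" by (simp add: phi_orth if_distrib cong: if_cong)
    finally show ?thesis unfolding c_def by (simp add: l2_inner_commute)
  qed
  have E0: "(\<integral>\<omega>. Q t r \<omega> * Q t r \<omega> \<partial>P) = 0"
    using G1(3)[OF r r, of t 0] G2[OF r r] rphi by simp
  have intQ: "integrable P (\<lambda>\<omega>. Q t r \<omega> * Q t r \<omega>)"
    using G1(1)[OF r r, of t 0] by simp
  have "AE \<omega> in P. Q t r \<omega> * Q t r \<omega> = 0"
    using integral_nonneg_eq_0_iff_AE[OF intQ] E0 by simp
  with AE_good[of t] show ?thesis
  proof eventually_elim
    case (elim \<omega>)
    have "Q t r \<omega> = (\<integral>u. Z t \<omega> u * f u - (\<Sum>i\<in>UNIV. c i * (Z t \<omega> u * \<phi> i u)) \<partial>lborel)"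
      unfolding Q_def r_def by (simp add: algebra_simps sum_distrib_left)
    also have "\<dots> = Q t f \<omega> - (\<Sum>i\<in>UNIV. c i * Q t (\<phi> i) \<omega>)"
      unfolding Q_def using Zg_int[OF elim(1) f] Zg_int[OF elim(1) phi_L2]
      by (simp add: Bochner_Integration.integral_sum)
    finally have "Q t r \<omega> = Q t f \<omega> - (\<Sum>i\<in>UNIV. c i * Q t (\<phi> i) \<omega>)" .
    moreover have "Q t r \<omega> = 0" using elim(2) by simp
    ultimately show ?case unfolding c_def by simp
  qed
qed

end


lemma zero_by_rectangles:
  fixes D :: "real \<times> real \<Rightarrow> real"
  assumes int: "integrable (lborel \<Otimes>\<^sub>M lborel) D"
    and rect: "\<And>A B. A \<in> sets borel \<Longrightarrow> B \<in> sets borel \<Longrightarrow>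
        (\<integral>x. indicator A (fst x) * indicator B (snd x) * D x \<partial>(lborel \<Otimes>\<^sub>M lborel)) = 0"
  shows "AE x in lborel \<Otimes>\<^sub>M lborel. D x = 0"
proof (rule sigma_finite_measure.density_zero[OF sigma_finite_pair_measure[OF sigma_finite_lborel sigma_finite_lborel] int])
  let ?G = "{a \<times> b | a b. a \<in> sets (lborel::real measure) \<and> b \<in> sets (lborel::real measure)}"
  let ?\<Omega> = "space (lborel::real measure) \<times> space (lborel::real measure)"
  fix S :: "(real \<times> real) set" assume S: "S \<in> sets (lborel \<Otimes>\<^sub>M lborel)"
  hence S': "S \<in> sigma_sets ?\<Omega> ?G" by (simp add: sets_pair_measure)
  show "set_lebesgue_integral (lborel \<Otimes>\<^sub>M lborel) S D = 0"
    using Int_stable_pair_measure_generator pair_measure_closed S'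
  proof (induction rule: sigma_sets_induct_disjoint)
    case (basic A)
    then obtain a b where ab: "A = a \<times> b" "a \<in> sets borel" "b \<in> sets borel" by auto
    show ?case using rect[OF ab(2,3)] unfolding set_lebesgue_integral_def ab(1)
      by (simp add: indicator_times)
  next
    case empty show ?case by (simp add: set_lebesgue_integral_def)
  next
    case (compl A)
    have A: "A \<in> sets (lborel \<Otimes>\<^sub>M lborel)" using compl(1) by (simp add: sets_pair_measure)
    have tot: "set_lebesgue_integral (lborel \<Otimes>\<^sub>M lborel) UNIV D = 0"
      using rect[of UNIV UNIV] unfolding set_lebesgue_integral_def by simp
    have "set_lebesgue_integral (lborel \<Otimes>\<^sub>M lborel) (?\<Omega> - A) D
        = (\<integral>x. D x - indicator A x * D x \<partial>(lborel \<Otimes>\<^sub>M lborel))"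
      unfolding set_lebesgue_integral_def
      by (intro Bochner_Integration.integral_cong) (auto simp: indicator_def)
    also have "\<dots> = (\<integral>x. D x \<partial>(lborel \<Otimes>\<^sub>M lborel)) - (\<integral>x. indicator A x * D x \<partial>(lborel \<Otimes>\<^sub>M lborel))"
      using int integrable_mult_indicator[OF A int] by (intro Bochner_Integration.integral_diff) auto
    also have "\<dots> = 0" using tot compl(2) unfolding set_lebesgue_integral_def by simp
    finally show ?case .
  next
    case (union A)
    have A: "A i \<in> sets (lborel \<Otimes>\<^sub>M lborel)" for i using union(2) by (auto simp: sets_pair_measure)
    have "set_lebesgue_integral (lborel \<Otimes>\<^sub>M lborel) (\<Union>i. A i) D = (\<Sum>i. set_lebesgue_integral (lborel \<Otimes>\<^sub>M lborel) (A i) D)"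
    proof (rule lebesgue_integral_countable_add)
      show "A i \<in> sets (lborel \<Otimes>\<^sub>M lborel)" for i by (rule A)
      show "A i \<inter> A j = {}" if "i \<noteq> j" for i j using union(1) that by (auto simp: disjoint_family_on_def)
      show "set_integrable (lborel \<Otimes>\<^sub>M lborel) (\<Union>i. A i) D"
        unfolding set_integrable_def using A by (intro integrable_mult_indicator int) auto
    qed
    also have "\<dots> = 0" using union(3) by simp
    finally show ?case .
  qed
qed


context curve begin

lemma set_int_one: "set_integrable lborel I (\<lambda>_. 1::real)"
  unfolding set_integrable_def using integrable_real_indicator[OF I_sets' I_fin] by simp

lemma L2_one: "L2 I (\<lambda>_. 1)"
  unfolding L2_def using set_int_one by simp

lemma L2_ind: assumes A: "A \<in> sets borel" shows "L2 I (indicator A)"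
  unfolding L2_def
proof
  show "indicator A \<in> borel_measurable lborel" using A by simp
  have "integrable lborel (indicator (I \<inter> A) :: real \<Rightarrow> real)"
  proof (rule integrable_real_indicator)
    show "I \<inter> A \<in> sets lborel" using A I_sets' by auto
    have "emeasure lborel (I \<inter> A) \<le> emeasure lborel I" by (intro emeasure_mono) (use I_sets' in auto)
    thus "emeasure lborel (I \<inter> A) < \<infinity>" using I_fin by (simp add: le_less_trans)
  qed
  moreover have "(\<lambda>x. indicator I x *\<^sub>R (indicator A x :: real)\<^sup>2) = (indicator (I \<inter> A) :: real \<Rightarrow> real)"
    by (auto simp: indicator_def fun_eq_iff)
  ultimately show "set_integrable lborel I (\<lambda>u. (indicator A u :: real)\<^sup>2)"
    unfolding set_integrable_def by simp
qed

lemma ind_int: "L2 I f \<Longrightarrow> integrable lborel (\<lambda>u. indicator I u * f u)"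
  using ind_fg_int[OF L2_one, of f] by simp

definition Sg where "Sg k i j = (\<integral>\<omega>. Q 0 (\<phi> i) \<omega> * Q (int k) (\<phi> j) \<omega> \<partial>P)"
definition Kf where "Kf k u v = (\<Sum>i\<in>UNIV. \<Sum>j\<in>UNIV. \<phi> i u * Sg k i j * \<phi> j v)"

lemma bilin:
  assumes g: "L2 I g" and h: "L2 I h"
  shows "(\<integral>x. g (fst x) * h (snd x) * Mh k (fst x) (snd x) \<partial>(lborel \<Otimes>\<^sub>M lborel))
       = (\<Sum>i\<in>UNIV. \<Sum>j\<in>UNIV. l2_inner I (\<phi> i) g * l2_inner I (\<phi> j) h * Sg k i j)"
proof -
  have "(\<integral>x. g (fst x) * h (snd x) * Mh k (fst x) (snd x) \<partial>(lborel \<Otimes>\<^sub>M lborel))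
      = (\<integral>\<omega>. Q 0 g \<omega> * Q (int k) h \<omega> \<partial>P)"
    using G1(3)[OF g h, of 0 k] by simp
  also have "\<dots> = (\<integral>\<omega>. (\<Sum>i\<in>UNIV. \<Sum>j\<in>UNIV. (l2_inner I (\<phi> i) g * l2_inner I (\<phi> j) h) * (Q 0 (\<phi> i) \<omega> * Q (int k) (\<phi> j) \<omega>)) \<partial>P)"
  proof (rule integral_cong_AE)
    show "(\<lambda>\<omega>. Q 0 g \<omega> * Q (int k) h \<omega>) \<in> borel_measurable P" using g h by measurable
    show "(\<lambda>\<omega>. \<Sum>i\<in>UNIV. \<Sum>j\<in>UNIV. (l2_inner I (\<phi> i) g * l2_inner I (\<phi> j) h) * (Q 0 (\<phi> i) \<omega> * Q (int k) (\<phi> j) \<omega>)) \<in> borel_measurable P"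
      using phi_L2 by measurable
    show "AE \<omega> in P. Q 0 g \<omega> * Q (int k) h \<omega> = (\<Sum>i\<in>UNIV. \<Sum>j\<in>UNIV. (l2_inner I (\<phi> i) g * l2_inner I (\<phi> j) h) * (Q 0 (\<phi> i) \<omega> * Q (int k) (\<phi> j) \<omega>))"
      using expand[OF g, of 0] expand[OF h, of "int k"]
    proof eventually_elim
      case (elim \<omega>)
      show ?case unfolding elim sum_product by (simp add: algebra_simps)
    qed
  qed
  also have "\<dots> = (\<Sum>i\<in>UNIV. \<Sum>j\<in>UNIV. l2_inner I (\<phi> i) g * l2_inner I (\<phi> j) h * Sg k i j)"
  proof -
    have int: "integrable P (\<lambda>\<omega>. Q 0 (\<phi> i) \<omega> * Q (int k) (\<phi> j) \<omega>)" for i j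
      using G1(1)[OF phi_L2[of i] phi_L2[of j], of 0 k] by simp
    show ?thesis unfolding Sg_def using int by (simp add: Bochner_Integration.integral_sum)
  qed
  finally show ?thesis .
qed

lemma kernel_ae:
  "AE x in lborel \<Otimes>\<^sub>M lborel. Mh k (fst x) (snd x) = indicator I (fst x) * indicator I (snd x) * Kf k (fst x) (snd x)"
proof -
  have [measurable]: "\<phi> j \<in> borel_measurable borel" for j using phi_L2 by (auto simp: L2_def)
  define D where "D x = Mh k (fst x) (snd x) - indicator I (fst x) * indicator I (snd x) * Kf k (fst x) (snd x)" for x
  have KfI: "indicator I (fst x) * indicator I (snd x) * Kf k (fst x) (snd x)
      = (\<Sum>i\<in>UNIV. \<Sum>j\<in>UNIV. Sg k i j * ((indicator I (fst x) * \<phi> i (fst x)) * (indicator I (snd x) * \<phi> j (snd x))))" for x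
    unfolding Kf_def by (simp add: sum_distrib_left algebra_simps)
  have intK: "integrable (lborel \<Otimes>\<^sub>M lborel) (\<lambda>x. indicator I (fst x) * indicator I (snd x) * Kf k (fst x) (snd x))"
    unfolding KfI
    by (intro Bochner_Integration.integrable_sum Bochner_Integration.integrable_mult_right) (rule prod_sep(1)[OF ind_int[OF phi_L2] ind_int[OF phi_L2]])
  have intM: "integrable (lborel \<Otimes>\<^sub>M lborel) (\<lambda>x. Mh k (fst x) (snd x))"
    using G1(2)[OF L2_one L2_one, of k] by simp
  have "AE x in lborel \<Otimes>\<^sub>M lborel. D x = 0"
  proof (rule zero_by_rectangles)
    show "integrable (lborel \<Otimes>\<^sub>M lborel) D" unfolding D_def using intM intK by simp
    fix A B :: "real set" assume A: "A \<in> sets borel" and B: "B \<in> sets borel"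
    have [measurable]: "A \<in> sets borel" "B \<in> sets borel" using A B by auto
    have e1: "(\<integral>x. indicator A (fst x) * indicator B (snd x) * Mh k (fst x) (snd x) \<partial>(lborel \<Otimes>\<^sub>M lborel))
       = (\<Sum>i\<in>UNIV. \<Sum>j\<in>UNIV. l2_inner I (\<phi> i) (indicator A) * l2_inner I (\<phi> j) (indicator B) * Sg k i j)"
      by (rule bilin[OF L2_ind[OF A] L2_ind[OF B]])
    have ia: "integrable lborel (\<lambda>u. indicator I u * (\<phi> i u * indicator A u))" for i
      by (rule ind_fg_int[OF phi_L2 L2_ind[OF A]])
    have ib: "integrable lborel (\<lambda>u. indicator I u * (\<phi> i u * indicator B u))" for i
      by (rule ind_fg_int[OF phi_L2 L2_ind[OF B]])
    have e2: "(\<integral>x. indicator A (fst x) * indicator B (snd x) * (indicator I (fst x) * indicator I (snd x) * Kf k (fst x) (snd x)) \<partial>(lborel \<Otimes>\<^sub>M lborel))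
       = (\<Sum>i\<in>UNIV. \<Sum>j\<in>UNIV. l2_inner I (\<phi> i) (indicator A) * l2_inner I (\<phi> j) (indicator B) * Sg k i j)"
    proof -
      have "(\<integral>x. indicator A (fst x) * indicator B (snd x) * (indicator I (fst x) * indicator I (snd x) * Kf k (fst x) (snd x)) \<partial>(lborel \<Otimes>\<^sub>M lborel))
          = (\<integral>x. (\<Sum>i\<in>UNIV. \<Sum>j\<in>UNIV. Sg k i j * ((indicator I (fst x) * (\<phi> i (fst x) * indicator A (fst x))) * (indicator I (snd x) * (\<phi> j (snd x) * indicator B (snd x))))) \<partial>(lborel \<Otimes>\<^sub>M lborel))"
      proof (rule Bochner_Integration.integral_cong[OF refl])
        fix x :: "real \<times> real"
        have "indicator A (fst x) * indicator B (snd x) * (indicator I (fst x) * indicator I (snd x) * Kf k (fst x) (snd x))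
          = indicator A (fst x) * indicator B (snd x) * (\<Sum>i\<in>UNIV. \<Sum>j\<in>UNIV. Sg k i j * ((indicator I (fst x) * \<phi> i (fst x)) * (indicator I (snd x) * \<phi> j (snd x))))"
          by (simp only: KfI)
        also have "\<dots> = (\<Sum>i\<in>UNIV. \<Sum>j\<in>UNIV. indicator A (fst x) * indicator B (snd x) * (Sg k i j * ((indicator I (fst x) * \<phi> i (fst x)) * (indicator I (snd x) * \<phi> j (snd x)))))"
          by (simp only: sum_distrib_left)
        also have "\<dots> = (\<Sum>i\<in>UNIV. \<Sum>j\<in>UNIV. Sg k i j * ((indicator I (fst x) * (\<phi> i (fst x) * indicator A (fst x))) * (indicator I (snd x) * (\<phi> j (snd x) * indicator B (snd x)))))"
          by (simp only: ac_simps)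
        finally show "indicator A (fst x) * indicator B (snd x) * (indicator I (fst x) * indicator I (snd x) * Kf k (fst x) (snd x))
          = (\<Sum>i\<in>UNIV. \<Sum>j\<in>UNIV. Sg k i j * ((indicator I (fst x) * (\<phi> i (fst x) * indicator A (fst x))) * (indicator I (snd x) * (\<phi> j (snd x) * indicator B (snd x)))))" .
      qed
      also have "\<dots> = (\<Sum>i\<in>UNIV. \<Sum>j\<in>UNIV. Sg k i j * ((\<integral>u. indicator I u * (\<phi> i u * indicator A u) \<partial>lborel) * (\<integral>u. indicator I u * (\<phi> j u * indicator B u) \<partial>lborel)))"
        using prod_sep[OF ia ib] by (simp add: Bochner_Integration.integral_sum integrable_sum)
      finally show ?thesis unfolding l2_inner_def set_lebesgue_integral_def by (simp add: algebra_simps)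
    qed
    have int1: "integrable (lborel \<Otimes>\<^sub>M lborel) (\<lambda>x. indicator A (fst x) * indicator B (snd x) * Mh k (fst x) (snd x))"
      using G1(2)[OF L2_ind[OF A] L2_ind[OF B], of k] by simp
    have int2: "integrable (lborel \<Otimes>\<^sub>M lborel) (\<lambda>x. indicator A (fst x) * indicator B (snd x) * (indicator I (fst x) * indicator I (snd x) * Kf k (fst x) (snd x)))"
    proof -
      have "integrable (lborel \<Otimes>\<^sub>M lborel) (\<lambda>x. indicator (A \<times> B) x *\<^sub>R (indicator I (fst x) * indicator I (snd x) * Kf k (fst x) (snd x)))"
        using A B by (intro integrable_mult_indicator intK) auto
      thus ?thesis by (simp add: indicator_times mult.assoc)
    qed
    show "(\<integral>x. indicator A (fst x) * indicator B (snd x) * D x \<partial>(lborel \<Otimes>\<^sub>M lborel)) = 0"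
      unfolding D_def right_diff_distrib using int1 int2 e1 e2
      by (simp add: Bochner_Integration.integral_diff)
  qed
  thus ?thesis unfolding D_def by simp
qed

end


context curve begin

lemma Mh_meas_split[measurable]: "(\<lambda>(u,v). Mh k u v) \<in> borel_measurable (lborel \<Otimes>\<^sub>M lborel)"
  using Mh_meas by (simp add: split_beta')

definition Ck where "Ck k = (\<chi> i l. \<Sum>j\<in>UNIV. Sg k i j * Sg k l j)"

definition Gd where "Gd k u \<longleftrightarrow> (AE v in lborel. v \<in> I \<longrightarrow> M k u v = Kf k u v)"

lemma AE_Gd: "AE u in lborel. u \<in> I \<longrightarrow> Gd k u"
proof -
  have "AE u in lborel. AE v in lborel. Mh k u v = indicator I u * indicator I v * Kf k u v"
    using lborel_pair.AE_pair[OF kernel_ae[of k]] by simp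
  thus ?thesis
  proof eventually_elim
    case (elim u)
    show ?case
    proof
      assume uI: "u \<in> I"
      from elim show "Gd k u" unfolding Gd_def
        by eventually_elim (use uI in \<open>auto simp: Mh_def\<close>)
    qed
  qed
qed

lemma Kf_alt: "Kf k u z = (\<Sum>j\<in>UNIV. (\<Sum>i\<in>UNIV. \<phi> i u * Sg k i j) * \<phi> j z)"
  unfolding Kf_def by (subst sum.swap) (simp add: sum_distrib_right)

lemma Nk_kernel:
  assumes uI: "u \<in> I" and vI: "v \<in> I" and Gu: "Gd k u" and Gv: "Gd k v"
  shows "Nk I M k u v = (\<Sum>i\<in>UNIV. \<Sum>l\<in>UNIV. \<phi> i u * Ck k $ i $ l * \<phi> l v)"
proof -
  have [measurable]: "\<phi> j \<in> borel_measurable borel" for j using phi_L2 by (auto simp: L2_def)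
  have mM: "(\<lambda>z. Mh k w z) \<in> borel_measurable borel" for w by measurable
  define a where "a j = (\<Sum>i\<in>UNIV. \<phi> i u * Sg k i j)" for j
  define b where "b j = (\<Sum>i\<in>UNIV. \<phi> i v * Sg k i j)" for j
  have "Nk I M k u v = (\<integral>z. indicator I z * (M k u z * M k v z) \<partial>lborel)"
    unfolding Nk_def set_lebesgue_integral_def by simp
  also have "\<dots> = (\<integral>z. indicator I z * (Kf k u z * Kf k v z) \<partial>lborel)"
  proof (rule integral_cong_AE)
    have "(\<lambda>z. indicator I z * (M k u z * M k v z)) = (\<lambda>z. Mh k u z * Mh k v z)"
      using uI vI by (auto simp: Mh_def indicator_def fun_eq_iff)
    thus "(\<lambda>z. indicator I z * (M k u z * M k v z)) \<in> borel_measurable lborel" using mM by simp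
    show "(\<lambda>z. indicator I z * (Kf k u z * Kf k v z)) \<in> borel_measurable lborel"
      unfolding Kf_def by measurable
    show "AE z in lborel. indicator I z * (M k u z * M k v z) = indicator I z * (Kf k u z * Kf k v z)"
      using Gu Gv unfolding Gd_def by eventually_elim (auto simp: indicator_def)
  qed
  also have "\<dots> = l2_inner I (\<lambda>z. \<Sum>j\<in>UNIV. a j * \<phi> j z) (\<lambda>z. \<Sum>m\<in>UNIV. b m * \<phi> m z)"
    unfolding l2_inner_def set_lebesgue_integral_def a_def b_def Kf_alt by simp
  also have "\<dots> = (\<Sum>j\<in>UNIV. a j * l2_inner I (\<phi> j) (\<lambda>z. \<Sum>m\<in>UNIV. b m * \<phi> m z))"
    by (rule l2_inner_sum_left[where F=\<phi>, OF I_sets' _ phi_L2]) (intro L2_sum[OF I_sets'] L2_cmult phi_L2)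
  also have "\<dots> = (\<Sum>j\<in>UNIV. a j * b j)"
  proof -
    have "l2_inner I (\<phi> j) (\<lambda>z. \<Sum>m\<in>UNIV. b m * \<phi> m z) = b j" for j
      using l2_inner_sum_right[where F=\<phi> and c=b and A=UNIV, OF I_sets' phi_L2[of j] phi_L2]
      by (simp add: phi_orth if_distrib cong: if_cong)
    thus ?thesis by simp
  qed
  also have "\<dots> = (\<Sum>i\<in>UNIV. \<Sum>l\<in>UNIV. \<phi> i u * Ck k $ i $ l * \<phi> l v)"
  proof -
    have "(\<Sum>j\<in>UNIV. a j * b j) = (\<Sum>j\<in>UNIV. \<Sum>i\<in>UNIV. \<Sum>l\<in>UNIV. \<phi> i u * Sg k i j * (\<phi> l v * Sg k l j))"
      unfolding a_def b_def by (simp add: sum_product)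
    also have "\<dots> = (\<Sum>i\<in>UNIV. \<Sum>j\<in>UNIV. \<Sum>l\<in>UNIV. \<phi> i u * Sg k i j * (\<phi> l v * Sg k l j))"
      by (rule sum.swap)
    also have "\<dots> = (\<Sum>i\<in>UNIV. \<Sum>l\<in>UNIV. \<Sum>j\<in>UNIV. \<phi> i u * Sg k i j * (\<phi> l v * Sg k l j))"
      by (rule sum.cong[OF refl]) (rule sum.swap)
    also have "\<dots> = (\<Sum>i\<in>UNIV. \<Sum>l\<in>UNIV. \<phi> i u * Ck k $ i $ l * \<phi> l v)"
      unfolding Ck_def by (intro sum.cong refl) (simp add: sum_distrib_left sum_distrib_right mult_ac)
    finally show ?thesis .
  qed
  finally show ?thesis .
qed

end


context curve begin

lemma Nk_meas:
  assumes uI: "u \<in> I"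
  shows "(\<lambda>v. indicator I v * Nk I M k u v) \<in> borel_measurable lborel"
proof -
  have eq: "indicator I v * Nk I M k u v = (\<integral>z. Mh k u z * Mh k v z \<partial>lborel)" for v
  proof -
    have "indicator I v * Nk I M k u v = (\<integral>z. indicator I v * (indicator I z * (M k u z * M k v z)) \<partial>lborel)"
      unfolding Nk_def set_lebesgue_integral_def by simp
    also have "\<dots> = (\<integral>z. Mh k u z * Mh k v z \<partial>lborel)"
      using uI by (intro Bochner_Integration.integral_cong) (auto simp: Mh_def indicator_def)
    finally show ?thesis .
  qed
  have "(\<lambda>v. \<integral>z. Mh k u z * Mh k v z \<partial>lborel) \<in> borel_measurable lborel"
    by (rule lborel.borel_measurable_lebesgue_integral) measurable
  thus ?thesis by (simp add: eq)
qed

lemma Nk_kern: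
  "AE u in lborel. u \<in> I \<longrightarrow> ((\<lambda>v. indicator I v * Nk I M k u v) \<in> borel_measurable lborel \<and>
     (AE v in lborel. v \<in> I \<longrightarrow> Nk I M k u v = (\<Sum>i\<in>UNIV. \<Sum>l\<in>UNIV. \<phi> i u * Ck k $ i $ l * \<phi> l v)))"
  using AE_Gd[of k]
proof eventually_elim
  case (elim u)
  show ?case
  proof
    assume uI: "u \<in> I"
    show "(\<lambda>v. indicator I v * Nk I M k u v) \<in> borel_measurable lborel \<and>
     (AE v in lborel. v \<in> I \<longrightarrow> Nk I M k u v = (\<Sum>i\<in>UNIV. \<Sum>l\<in>UNIV. \<phi> i u * Ck k $ i $ l * \<phi> l v))"
    proof
      show "(\<lambda>v. indicator I v * Nk I M k u v) \<in> borel_measurable lborel" by (rule Nk_meas[OF uI])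
      show "AE v in lborel. v \<in> I \<longrightarrow> Nk I M k u v = (\<Sum>i\<in>UNIV. \<Sum>l\<in>UNIV. \<phi> i u * Ck k $ i $ l * \<phi> l v)"
        using AE_Gd[of k] by eventually_elim (use elim uI Nk_kernel in auto)
    qed
  qed
qed

definition Cs where "Cs p = (\<chi> i l. \<Sum>k\<in>{1..p}. Ck k $ i $ l)"

lemma Kp_kern:
  "AE u in lborel. u \<in> I \<longrightarrow> ((\<lambda>v. indicator I v * Kp I M p u v) \<in> borel_measurable lborel \<and>
     (AE v in lborel. v \<in> I \<longrightarrow> Kp I M p u v = (\<Sum>i\<in>UNIV. \<Sum>l\<in>UNIV. \<phi> i u * Cs p $ i $ l * \<phi> l v)))"
proof -
  have all: "AE u in lborel. \<forall>k\<in>{1..p}. u \<in> I \<longrightarrow> Gd k u"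
    by (rule eventually_ball_finite) (auto intro: AE_Gd)
  show ?thesis using all
  proof eventually_elim
    case (elim u)
    show ?case
    proof
      assume uI: "u \<in> I"
      note eu = elim
      have m: "(\<lambda>v. indicator I v * Kp I M p u v) = (\<lambda>v. \<Sum>k\<in>{1..p}. indicator I v * Nk I M k u v)"
        unfolding Kp_def by (simp add: sum_distrib_left)
      show "(\<lambda>v. indicator I v * Kp I M p u v) \<in> borel_measurable lborel \<and>
        (AE v in lborel. v \<in> I \<longrightarrow> Kp I M p u v = (\<Sum>i\<in>UNIV. \<Sum>l\<in>UNIV. \<phi> i u * Cs p $ i $ l * \<phi> l v))"
      proof
        show "(\<lambda>v. indicator I v * Kp I M p u v) \<in> borel_measurable lborel"
          unfolding m by (intro borel_measurable_sum Nk_meas[OF uI])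
        show "AE v in lborel. v \<in> I \<longrightarrow> Kp I M p u v = (\<Sum>i\<in>UNIV. \<Sum>l\<in>UNIV. \<phi> i u * Cs p $ i $ l * \<phi> l v)"
          using all
        proof eventually_elim
          case (elim v)
          show ?case
          proof
            assume vI: "v \<in> I"
            have "Kp I M p u v = (\<Sum>k\<in>{1..p}. \<Sum>i\<in>UNIV. \<Sum>l\<in>UNIV. \<phi> i u * Ck k $ i $ l * \<phi> l v)"
              unfolding Kp_def using eu elim uI vI by (intro sum.cong refl Nk_kernel) auto
            also have "\<dots> = (\<Sum>i\<in>UNIV. \<Sum>k\<in>{1..p}. \<Sum>l\<in>UNIV. \<phi> i u * Ck k $ i $ l * \<phi> l v)"
              by (rule sum.swap)
            also have "\<dots> = (\<Sum>i\<in>UNIV. \<Sum>l\<in>UNIV. \<Sum>k\<in>{1..p}. \<phi> i u * Ck k $ i $ l * \<phi> l v)"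
              by (rule sum.cong[OF refl]) (rule sum.swap)
            also have "\<dots> = (\<Sum>i\<in>UNIV. \<Sum>l\<in>UNIV. \<phi> i u * Cs p $ i $ l * \<phi> l v)"
              unfolding Cs_def by (simp add: sum_distrib_left sum_distrib_right)
            finally show "Kp I M p u v = (\<Sum>i\<in>UNIV. \<Sum>l\<in>UNIV. \<phi> i u * Cs p $ i $ l * \<phi> l v)" .
          qed
        qed
      qed
    qed
  qed
qed

end


context curve begin

lemma qf_Ck: "x \<bullet> (Ck k *v x) = (\<Sum>j\<in>UNIV. (\<Sum>i\<in>UNIV. x$i * Sg k i j)\<^sup>2)"
proof -
  have "x \<bullet> (Ck k *v x) = (\<Sum>i\<in>UNIV. \<Sum>l\<in>UNIV. \<Sum>j\<in>UNIV. x$i * Sg k i j * (x$l * Sg k l j))"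
    unfolding inner_vec_def matrix_vector_mult_def Ck_def
    by (simp add: sum_distrib_left sum_distrib_right mult_ac)
  also have "\<dots> = (\<Sum>i\<in>UNIV. \<Sum>j\<in>UNIV. \<Sum>l\<in>UNIV. x$i * Sg k i j * (x$l * Sg k l j))"
    by (rule sum.cong[OF refl]) (rule sum.swap)
  also have "\<dots> = (\<Sum>j\<in>UNIV. \<Sum>i\<in>UNIV. \<Sum>l\<in>UNIV. x$i * Sg k i j * (x$l * Sg k l j))"
    by (rule sum.swap)
  also have "\<dots> = (\<Sum>j\<in>UNIV. (\<Sum>i\<in>UNIV. x$i * Sg k i j)\<^sup>2)"
    by (simp add: power2_eq_square sum_product)
  finally show ?thesis .
qed

lemma Ck_psd: "0 \<le> x \<bullet> (Ck k *v x)"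
  unfolding qf_Ck by (intro sum_nonneg) auto

lemma Ck_pd:
  assumes fr: "rank (\<chi> i j. Sg k i j) = CARD('d)" and x: "x \<noteq> 0"
  shows "0 < x \<bullet> (Ck k *v x)"
proof (rule ccontr)
  assume "\<not> 0 < x \<bullet> (Ck k *v x)"
  with Ck_psd[of x k] have "x \<bullet> (Ck k *v x) = 0" by linarith
  hence "\<forall>j\<in>UNIV. (\<Sum>i\<in>UNIV. x$i * Sg k i j)\<^sup>2 = 0"
    unfolding qf_Ck by (subst sum_nonneg_eq_0_iff[symmetric]) auto
  hence z: "(\<Sum>i\<in>UNIV. x$i * Sg k i j) = 0" for j by simp
  let ?S = "(\<chi> i j. Sg k i j) :: real^'d^'d"
  have "transpose ?S *v x = 0"
    using z by (simp add: vec_eq_iff matrix_vector_mult_def transpose_def mult.commute)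
  moreover have "inj ((*v) (transpose ?S))"
    using fr by (simp add: full_rank_injective[symmetric] rank_transpose)
  ultimately have "x = 0" by (metis injD matrix_vector_mult_0_right)
  with x show False by simp
qed

lemma Ck_sym: "transpose (Ck k) = Ck k"
  by (simp add: vec_eq_iff transpose_def Ck_def mult.commute)

lemma Cs_sym: "transpose (Cs p) = Cs p"
  using Ck_sym by (simp add: vec_eq_iff transpose_def Cs_def)

lemma Cs_qf: "x \<bullet> (Cs p *v x) = (\<Sum>k\<in>{1..p}. x \<bullet> (Ck k *v x))"
proof -
  have "Cs p *v x = (\<Sum>k\<in>{1..p}. Ck k *v x)"
    by (simp add: vec_eq_iff matrix_vector_mult_def Cs_def sum_component sum_distrib_right sum.swap[of _ UNIV])
  thus ?thesis by (simp add: inner_sum_right)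
qed

theorem main:
  assumes fr: "rank (\<chi> i j. Sg k0 i j) = CARD('d)" and k0: "1 \<le> k0"
  shows "nonzero_eigenspace_is I (Nk I M k0) \<phi> \<and> (\<forall>p. p \<ge> k0 \<longrightarrow> nonzero_eigenspace_is I (Kp I M p) \<phi>)"
proof (intro conjI allI impI)
  show "nonzero_eigenspace_is I (Nk I M k0) \<phi>"
    by (rule generic_eigen[OF I_sets' phi_L2 phi_orth Ck_sym Ck_pd[OF fr] Nk_kern])
  fix p assume p: "k0 \<le> p"
  have pd: "0 < x \<bullet> (Cs p *v x)" if "x \<noteq> 0" for x
  proof -
    have "0 < x \<bullet> (Ck k0 *v x)" by (rule Ck_pd[OF fr that])
    also have "\<dots> \<le> (\<Sum>k\<in>{1..p}. x \<bullet> (Ck k *v x))"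
      using k0 p by (intro member_le_sum Ck_psd) auto
    finally show ?thesis by (simp add: Cs_qf)
  qed
  show "nonzero_eigenspace_is I (Kp I M p) \<phi>"
    by (rule generic_eigen[OF I_sets' phi_L2 phi_orth Cs_sym pd Kp_kern])
qed

end


theorem proposition1:
  fixes P :: "'w measure"
    and a b :: real
    and X \<epsilon> Y :: "int \<Rightarrow> 'w \<Rightarrow> real \<Rightarrow> real"
    and \<mu> :: "real \<Rightarrow> real"
    and M :: "nat \<Rightarrow> real \<Rightarrow> real \<Rightarrow> real"
    and lam :: "'d::finite \<Rightarrow> real"
    and \<phi> :: "'d \<Rightarrow> real \<Rightarrow> real"
    and k0 :: nat
  defines "I \<equiv> {a..b}"
  assumes prob: "prob_space P"
    and ab: "a \<le> b"
    and Y_def: "\<And>t \<omega> u. Y t \<omega> u = X t \<omega> u + \<epsilon> t \<omega> u"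
    and X_meas: "\<And>t. (\<lambda>(\<omega>, u). X t \<omega> u) \<in> borel_measurable (P \<Otimes>\<^sub>M lborel)"
    and eps_mean: "\<And>t u. u \<in> I \<Longrightarrow> (\<integral>\<omega>. \<epsilon> t \<omega> u \<partial>P) = 0"
    and eps_uncorr: "\<And>t s u v. t \<noteq> s \<Longrightarrow> u \<in> I \<Longrightarrow> v \<in> I \<Longrightarrow>
          (\<integral>\<omega>. \<epsilon> t \<omega> u * \<epsilon> s \<omega> v \<partial>P) = 0"
    and moments: "\<And>t. (\<integral>\<^sup>+ u\<in>I. (\<integral>\<^sup>+ \<omega>. ennreal ((X t \<omega> u)\<^sup>2 + (\<epsilon> t \<omega> u)\<^sup>2) \<partial>P) \<partial>lborel) < \<infinity>"
    and mean: "\<And>t u. u \<in> I \<Longrightarrow> (\<integral>\<omega>. X t \<omega> u \<partial>P) = \<mu> u"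
    and cov: "\<And>t k u v. u \<in> I \<Longrightarrow> v \<in> I \<Longrightarrow>
          (\<integral>\<omega>. (X t \<omega> u - \<mu> u) * (X (t + int k) \<omega> v - \<mu> v) \<partial>P) = M k u v"
    and X_eps_uncorr: "\<And>t k u v. u \<in> I \<Longrightarrow> v \<in> I \<Longrightarrow>
          (\<integral>\<omega>. (X t \<omega> u - \<mu> u) * \<epsilon> (t + k) \<omega> v \<partial>P) = 0"
    and phi_L2: "\<And>j. L2 I (\<phi> j)"
    and phi_orth: "\<And>i j. l2_inner I (\<phi> i) (\<phi> j) = (if i = j then 1 else 0)"
    and lambda_pos: "\<And>j. lam j > 0"
    and spectral: "AE x in lborel \<Otimes>\<^sub>M lborel. fst x \<in> I \<longrightarrow> snd x \<in> I \<longrightarrow>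
          M 0 (fst x) (snd x) = (\<Sum>j\<in>UNIV. lam j * \<phi> j (fst x) * \<phi> j (snd x))"
    and k0: "k0 \<ge> 1"
    and full_rank: "\<And>t. rank (\<chi> i j. \<integral>\<omega>. kl_score I X \<mu> \<phi> t i \<omega> * kl_score I X \<mu> \<phi> (t + int k0) j \<omega> \<partial>P)
                        = CARD('d)"
  shows "nonzero_eigenspace_is I (Nk I M k0) \<phi>
         \<and> (\<forall>p. p \<ge> k0 \<longrightarrow> nonzero_eigenspace_is I (Kp I M p) \<phi>)"
proof -
  have Idef: "I = {a..b}" by (simp add: I_def)
  have momX: "(\<integral>\<^sup>+ u\<in>I. (\<integral>\<^sup>+ \<omega>. ennreal ((X t \<omega> u)\<^sup>2) \<partial>P) \<partial>lborel) < \<infinity>" for t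
  proof -
    have "(\<integral>\<^sup>+ u\<in>I. (\<integral>\<^sup>+ \<omega>. ennreal ((X t \<omega> u)\<^sup>2) \<partial>P) \<partial>lborel)
        \<le> (\<integral>\<^sup>+ u\<in>I. (\<integral>\<^sup>+ \<omega>. ennreal ((X t \<omega> u)\<^sup>2 + (\<epsilon> t \<omega> u)\<^sup>2) \<partial>P) \<partial>lborel)"
      by (intro nn_integral_mono mult_right_mono ennreal_leI) simp_all
    also have "\<dots> < \<infinity>" by (rule moments)
    finally show ?thesis .
  qed
  interpret C: curve P I a b X \<mu> M lam \<phi>
    by (rule curve.intro[OF prob Idef X_meas momX mean cov phi_L2 phi_orth spectral])
  have kl: "kl_score I X \<mu> \<phi> t j \<omega> = C.Q t (\<phi> j) \<omega>" for t j \<omega>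
    unfolding kl_score_def C.Q_def set_lebesgue_integral_def
    by (intro Bochner_Integration.integral_cong refl) (auto simp: C.Z_def C.mu_eq indicator_def)
  have fr: "rank (\<chi> i j. C.Sg k0 i j) = CARD('d)"
    using full_rank[of 0] unfolding kl C.Sg_def by simp
  show ?thesis by (rule C.main[OF fr k0])
qed


end
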